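(* Let $h>0$ and $\lambda_1\in\mathbb{C}\setminus\{0\}$. Let $(U_n(t),R_n(t),Q_n(t))_{n\in\mathbb{Z}}$ be a solution of the semi-discrete massive Thirring model (MTM) system (defined in the context). Let $\Phi_n(t)=(f_n(t),g_n(t))^T$, $n\in\mathbb{Z}$, be a nonzero solution of both equations of the Lax pair at $\lambda=\lambda_1$ with these potentials. Define $$U^{[1]}_n = -\frac{2\mathrm{i} (\bar{\lambda}_1 |f_n|^2 + \lambda_1 |g_n|^2) U_n - h |\lambda_1|^2 (\lambda_1 |f_n|^2 + \bar{\lambda}_1 |g_n|^2) U_n + 2\mathrm{i} (\lambda_1^2 - \bar{\lambda}_1^2) f_n \bar{g}_n}{2\mathrm{i} (\lambda_1 |f_n|^2 + \bar{\lambda}_1 |g_n|^2) - h |\lambda_1|^2 (\bar{\lambda}_1 |f_n|^2 + \lambda_1 |g_n|^2) + h (\lambda_1^2 - \bar{\lambda}_1^2) \bar{f}_n g_n U_n},$$ $$R^{[1]}_{n} = -\frac{( \bar{\lambda}_1 |f_{n}|^2 + \lambda_1 |g_{n}|^2) R_n + (\lambda_1^2-\bar{\lambda}_1^2) f_{n} \bar{g}_{n}}{\lambda_1 |f_{n}|^2 + \bar{\lambda}_1 |g_{n}|^2},$$ $$Q^{[1]}_{n} = -\frac{|\lambda_1|^2 ( \lambda_1 |f_{n}|^2+\bar{\lambda}_1 |g_{n}|^2) Q_n + (\lambda_1^2-\bar{\lambda}_1^2) f_{n} \bar{g}_{n}}{|\lambda_1|^2(\bar{\lambda}_1 |f_{n}|^2+\lambda_1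 |g_{n}|^2)},$$ at all $(n,t)$ where the denominators are nonzero. Then $(U^{[1]}_n,R^{[1]}_n,Q^{[1]}_n)$ is again a solution of the semi-discrete MTM system.
   Context: Fix a lattice spacing $h>0$. The semi-discrete MTM system for complex-valued differentiable functions $U_n(t),R_n(t),Q_n(t)$, $n\in\mathbb{Z}$, $t\in\mathbb{R}$, is $$4\mathrm{i}\frac{dU_n}{dt}+Q_{n+1}+Q_n+\frac{2\mathrm{i}}{h}(R_{n+1}-R_n)+U_n^2(\bar R_n+\bar R_{n+1})-U_n(|Q_{n+1}|^2+|Q_n|^2+|R_{n+1}|^2+|R_n|^2)-\frac{\mathrm{i}h}{2}U_n^2(\bar Q_{n+1}-\bar Q_n)=0,$$ $$-\frac{2\mathrm{i}}{h}(Q_{n+1}-Q_n)+2U_n-|U_n|^2(Q_{n+1}+Q_n)=0,\qquad R_{n+1}+R_n-2U_n+\frac{\mathrm{i}h}{2}|U_n|^2(R_{n+1}-R_n)=0.$$ The Lax pair with spectral parameter $\lambda\in\mathbb{C}\setminus\{0\}$ consists of the two linear equations for $\Phi_n(t)\in\mathbb{C}^2$: $$\Phi_{n+1}=N_n(\lambda)\Phi_n,\quad N_n(\lambda)=\begin{pmatrix}\lambda+\frac{2\mathrm{i}}{h\lambda}S_n & \frac{2U_n}{1-\frac{\mathrm{i}}{2}h|U_n|^2}\\ \frac{2\bar U_n}{1-\frac{\mathrm{i}}{2}h|U_n|^2} & \frac{2\mathrm{i}}{h\lambda}-\lambda S_n\end{pmatrix},\quad S_n=\frac{1+\frac{\mathrm{i}}{2}h|U_n|^2}{1-\frac{\mathrm{i}}{2}h|U_n|^2},$$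 $$\frac{d\Phi_n}{dt}=P_n(\lambda)\Phi_n,\quad P_n(\lambda)=\frac{\mathrm{i}}{2}\begin{pmatrix}\lambda^2-|R_n|^2 & \lambda R_n-Q_n\lambda^{-1}\\ \lambda\bar R_n-\bar Q_n\lambda^{-1} & |Q_n|^2-\lambda^{-2}\end{pmatrix}.$$ The semi-discrete MTM system is the compatibility condition $\frac{d}{dt}N_n=P_{n+1}N_n-N_nP_n$ of this Lax pair. *)

theory Defs
  imports "HOL-Analysis.Analysis"
begin

definition asq :: "complex \<Rightarrow> complex" where
  "asq z = complex_of_real ((cmod z)^2)"

text \<open>The three equations of the semi-discrete MTM system at lattice site n and time t,
  where D stands for dU_n/dt.\<close>
definition mtm_eqs ::
  "real \<Rightarrow> (int \<Rightarrow> real \<Rightarrow> complex) \<Rightarrow> (int \<Rightarrow> real \<Rightarrow> complex) \<Rightarrow> (int \<Rightarrow> real \<Rightarrow> complex)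
    \<Rightarrow> int \<Rightarrow> real \<Rightarrow> complex \<Rightarrow> bool" where
  "mtm_eqs h U R Q n t D \<longleftrightarrow>
     (let u = U n t; r0 = R n t; r1 = R (n+1) t; q0 = Q n t; q1 = Q (n+1) t; hc = complex_of_real h in
      4 * \<i> * D + q1 + q0 + (2 * \<i> / hc) * (r1 - r0) + u^2 * (cnj r0 + cnj r1)
        - u * (asq q1 + asq q0 + asq r1 + asq r0) - (\<i> * hc / 2) * u^2 * (cnj q1 - cnj q0) = 0
      \<and> - (2 * \<i> / hc) * (q1 - q0) + 2 * u - asq u * (q1 + q0) = 0
      \<and> r1 + r0 - 2 * u + (\<i> * hc / 2) * asq u * (r1 - r0) = 0)"

definition mtm_solution ::
  "real \<Rightarrow> (int \<Rightarrow> real \<Rightarrow> complex) \<Rightarrow> (int \<Rightarrow> real \<Rightarrow> complex) \<Rightarrow> (int \<Rightarrow> real \<Rightarrow> complex) \<Rightarrow> bool" where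
  "mtm_solution h U R Q \<longleftrightarrow>
     (\<forall>n t. U n differentiable (at t) \<and> R n differentiable (at t) \<and> Q n differentiable (at t)
        \<and> mtm_eqs h U R Q n t (vector_derivative (U n) (at t)))"

definition mtm_S :: "real \<Rightarrow> complex \<Rightarrow> complex" where
  "mtm_S h u = (1 + \<i> / 2 * complex_of_real h * asq u) / (1 - \<i> / 2 * complex_of_real h * asq u)"

definition N11 :: "real \<Rightarrow> complex \<Rightarrow> complex \<Rightarrow> complex" where
  "N11 h u l = l + 2 * \<i> / (complex_of_real h * l) * mtm_S h u"
definition N12 :: "real \<Rightarrow> complex \<Rightarrow> complex \<Rightarrow> complex" where
  "N12 h u l = 2 * u / (1 - \<i> / 2 * complex_of_real h * asq u)"
definition N21 :: "real \<Rightarrow> complex \<Rightarrow> complex \<Rightarrow> complex" where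
  "N21 h u l = 2 * cnj u / (1 - \<i> / 2 * complex_of_real h * asq u)"
definition N22 :: "real \<Rightarrow> complex \<Rightarrow> complex \<Rightarrow> complex" where
  "N22 h u l = 2 * \<i> / (complex_of_real h * l) - l * mtm_S h u"

definition P11 :: "complex \<Rightarrow> complex \<Rightarrow> complex \<Rightarrow> complex" where
  "P11 r q l = \<i> / 2 * (l^2 - asq r)"
definition P12 :: "complex \<Rightarrow> complex \<Rightarrow> complex \<Rightarrow> complex" where
  "P12 r q l = \<i> / 2 * (l * r - q / l)"
definition P21 :: "complex \<Rightarrow> complex \<Rightarrow> complex \<Rightarrow> complex" where
  "P21 r q l = \<i> / 2 * (l * cnj r - cnj q / l)"
definition P22 :: "complex \<Rightarrow> complex \<Rightarrow> complex \<Rightarrow> complex" where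
  "P22 r q l = \<i> / 2 * (asq q - 1 / l^2)"

definition lax_solution ::
  "real \<Rightarrow> (int \<Rightarrow> real \<Rightarrow> complex) \<Rightarrow> (int \<Rightarrow> real \<Rightarrow> complex) \<Rightarrow> (int \<Rightarrow> real \<Rightarrow> complex)
    \<Rightarrow> complex \<Rightarrow> (int \<Rightarrow> real \<Rightarrow> complex) \<Rightarrow> (int \<Rightarrow> real \<Rightarrow> complex) \<Rightarrow> bool" where
  "lax_solution h U R Q l f g \<longleftrightarrow>
     (\<forall>n t.
        f (n+1) t = N11 h (U n t) l * f n t + N12 h (U n t) l * g n t
      \<and> g (n+1) t = N21 h (U n t) l * f n t + N22 h (U n t) l * g n t
      \<and> (f n has_vector_derivative (P11 (R n t) (Q n t) l * f n t + P12 (R n t) (Q n t) l * g n t)) (at t)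
      \<and> (g n has_vector_derivative (P21 (R n t) (Q n t) l * f n t + P22 (R n t) (Q n t) l * g n t)) (at t))"

definition U1_num :: "real \<Rightarrow> complex \<Rightarrow> complex \<Rightarrow> complex \<Rightarrow> complex \<Rightarrow> complex" where
  "U1_num h l u f g = - (2 * \<i> * (cnj l * asq f + l * asq g) * u
      - complex_of_real h * asq l * (l * asq f + cnj l * asq g) * u
      + 2 * \<i> * (l^2 - (cnj l)^2) * f * cnj g)"
definition U1_den :: "real \<Rightarrow> complex \<Rightarrow> complex \<Rightarrow> complex \<Rightarrow> complex \<Rightarrow> complex" where
  "U1_den h l u f g = 2 * \<i> * (l * asq f + cnj l * asq g)
      - complex_of_real h * asq l * (cnj l * asq f + l * asq g)
      + complex_of_real h * (l^2 - (cnj l)^2) * cnj f * g * u"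
definition R1_num :: "complex \<Rightarrow> complex \<Rightarrow> complex \<Rightarrow> complex \<Rightarrow> complex" where
  "R1_num l r f g = - ((cnj l * asq f + l * asq g) * r + (l^2 - (cnj l)^2) * f * cnj g)"
definition R1_den :: "complex \<Rightarrow> complex \<Rightarrow> complex \<Rightarrow> complex" where
  "R1_den l f g = l * asq f + cnj l * asq g"
definition Q1_num :: "complex \<Rightarrow> complex \<Rightarrow> complex \<Rightarrow> complex \<Rightarrow> complex" where
  "Q1_num l q f g = - (asq l * (l * asq f + cnj l * asq g) * q + (l^2 - (cnj l)^2) * f * cnj g)"
definition Q1_den :: "complex \<Rightarrow> complex \<Rightarrow> complex \<Rightarrow> complex" where
  "Q1_den l f g = asq l * (cnj l * asq f + l * asq g)"

end

theory Submission
  imports Defs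
begin

definition NuP :: "complex\<Rightarrow>complex\<Rightarrow>complex\<Rightarrow>complex\<Rightarrow>complex\<Rightarrow>complex\<Rightarrow>complex\<Rightarrow>complex\<Rightarrow>complex\<Rightarrow>complex" where
  "NuP j h l lb u f fb g gb = - (2 * j * (lb * (f * fb) + l * (g * gb)) * u - h * l * lb * (l * (f * fb) + lb * (g * gb)) * u + 2 * j * (l*l-lb*lb) * (f * gb))"

definition UdP :: "complex\<Rightarrow>complex\<Rightarrow>complex\<Rightarrow>complex\<Rightarrow>complex\<Rightarrow>complex\<Rightarrow>complex\<Rightarrow>complex\<Rightarrow>complex\<Rightarrow>complex" where
  "UdP j h l lb u f fb g gb = 2 * j * (l * (f * fb) + lb * (g * gb)) - h * l * lb * (lb * (f * fb) + l * (g * gb)) + h * (l*l-lb*lb) * (fb * g) * u"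

definition NubP :: "complex\<Rightarrow>complex\<Rightarrow>complex\<Rightarrow>complex\<Rightarrow>complex\<Rightarrow>complex\<Rightarrow>complex\<Rightarrow>complex\<Rightarrow>complex\<Rightarrow>complex" where
  "NubP j h l lb ub f fb g gb = - ((-2) * j * (l * (f * fb) + lb * (g * gb)) * ub - h * l * lb * (lb * (f * fb) + l * (g * gb)) * ub + 2 * j * (l*l-lb*lb) * (fb * g))"

definition UdbP :: "complex\<Rightarrow>complex\<Rightarrow>complex\<Rightarrow>complex\<Rightarrow>complex\<Rightarrow>complex\<Rightarrow>complex\<Rightarrow>complex\<Rightarrow>complex\<Rightarrow>complex" where
  "UdbP j h l lb ub f fb g gb = (-2) * j * (lb * (f * fb) + l * (g * gb)) - h * l * lb * (l * (f * fb) + lb * (g * gb)) - h * (l*l-lb*lb) * (f * gb) * ub"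

definition Rd0P :: "complex\<Rightarrow>complex\<Rightarrow>complex\<Rightarrow>complex\<Rightarrow>complex\<Rightarrow>complex\<Rightarrow>complex" where
  "Rd0P l lb f fb g gb = l * (f * fb) + lb * (g * gb)"

definition Rd0bP :: "complex\<Rightarrow>complex\<Rightarrow>complex\<Rightarrow>complex\<Rightarrow>complex\<Rightarrow>complex\<Rightarrow>complex" where
  "Rd0bP l lb f fb g gb = lb * (f * fb) + l * (g * gb)"

definition R0nP :: "complex\<Rightarrow>complex\<Rightarrow>complex\<Rightarrow>complex\<Rightarrow>complex\<Rightarrow>complex\<Rightarrow>complex\<Rightarrow>complex" where
  "R0nP l lb r f fb g gb = - ((lb * (f * fb) + l * (g * gb)) * r + (l*l-lb*lb) * (f * gb))"

definition R0nbP :: "complex\<Rightarrow>complex\<Rightarrow>complex\<Rightarrow>complex\<Rightarrow>complex\<Rightarrow>complex\<Rightarrow>complex\<Rightarrow>complex" where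
  "R0nbP l lb rb f fb g gb = - ((l * (f * fb) + lb * (g * gb)) * rb - (l*l-lb*lb) * (fb * g))"

definition Q0nP :: "complex\<Rightarrow>complex\<Rightarrow>complex\<Rightarrow>complex\<Rightarrow>complex\<Rightarrow>complex\<Rightarrow>complex\<Rightarrow>complex" where
  "Q0nP l lb q f fb g gb = - (l * lb * (l * (f * fb) + lb * (g * gb)) * q + (l*l-lb*lb) * (f * gb))"

definition Q0nbP :: "complex\<Rightarrow>complex\<Rightarrow>complex\<Rightarrow>complex\<Rightarrow>complex\<Rightarrow>complex\<Rightarrow>complex\<Rightarrow>complex" where
  "Q0nbP l lb qb f fb g gb = - (l * lb * (lb * (f * fb) + l * (g * gb)) * qb - (l*l-lb*lb) * (fb * g))"

definition s2P :: "complex\<Rightarrow>complex\<Rightarrow>complex\<Rightarrow>complex\<Rightarrow>complex" where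
  "s2P j h u ub = 2 - j * h * u * ub"

definition sb2P :: "complex\<Rightarrow>complex\<Rightarrow>complex\<Rightarrow>complex\<Rightarrow>complex" where
  "sb2P j h u ub = 2 + j * h * u * ub"

definition F1P :: "complex\<Rightarrow>complex\<Rightarrow>complex\<Rightarrow>complex\<Rightarrow>complex\<Rightarrow>complex\<Rightarrow>complex\<Rightarrow>complex" where
  "F1P j h l u ub f g = (h * l * l * (2 - j * h * u * ub) + 2 * j * (2 + j * h * u * ub)) * f + 4 * h * l * u * g"

definition G1P :: "complex\<Rightarrow>complex\<Rightarrow>complex\<Rightarrow>complex\<Rightarrow>complex\<Rightarrow>complex\<Rightarrow>complex\<Rightarrow>complex" where
  "G1P j h l u ub f g = 4 * h * l * ub * f + (2 * j * (2 - j * h * u * ub) - h * l * l * (2 + j * h * u * ub)) * g"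

definition F1bP :: "complex\<Rightarrow>complex\<Rightarrow>complex\<Rightarrow>complex\<Rightarrow>complex\<Rightarrow>complex\<Rightarrow>complex\<Rightarrow>complex" where
  "F1bP j h lb u ub fb gb = (h * lb * lb * (2 + j * h * u * ub) - 2 * j * (2 - j * h * u * ub)) * fb + 4 * h * lb * ub * gb"

definition G1bP :: "complex\<Rightarrow>complex\<Rightarrow>complex\<Rightarrow>complex\<Rightarrow>complex\<Rightarrow>complex\<Rightarrow>complex\<Rightarrow>complex" where
  "G1bP j h lb u ub fb gb = 4 * h * lb * u * fb + ((-2) * j * (2 + j * h * u * ub) - h * lb * lb * (2 - j * h * u * ub)) * gb"

definition K2P :: "complex\<Rightarrow>complex\<Rightarrow>complex\<Rightarrow>complex\<Rightarrow>complex\<Rightarrow>complex\<Rightarrow>complex\<Rightarrow>complex\<Rightarrow>complex\<Rightarrow>complex\<Rightarrow>complex" where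
  "K2P j h l lb u ub f fb g gb = ((-1*j)*u*ub*f*fb*l^2*lb^3*h^3 + 2*u*ub*f*fb*l^2*lb*h^2 + -2*u*ub*f*fb*lb^3*h^2 + (-4*j)*u*ub*f*fb*lb*h + (-1*j)*u*ub*g*gb*l^3*lb^2*h^3 + -2*u*ub*g*gb*l^3*h^2 + 2*u*ub*g*gb*l*lb^2*h^2 + (-4*j)*u*ub*g*gb*l*h + -4*u*fb*g*l^3*lb*h^2 + 4*u*fb*g*l*lb^3*h^2 + (-8*j)*ub*f*gb*l^2*h + (8*j)*ub*f*gb*lb^2*h + 2*f*fb*l^2*lb^3*h^2 + (-4*j)*f*fb*l^2*lb*h + (4*j)*f*fb*lb^3*h + 8*f*fb*lb + 2*g*gb*l^3*lb^2*h^2 + (4*j)*g*gb*l^3*h + (-4*j)*g*gb*l*lb^2*h + 8*g*gb*l)"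

definition K2bP :: "complex\<Rightarrow>complex\<Rightarrow>complex\<Rightarrow>complex\<Rightarrow>complex\<Rightarrow>complex\<Rightarrow>complex\<Rightarrow>complex\<Rightarrow>complex\<Rightarrow>complex\<Rightarrow>complex" where
  "K2bP j h l lb u ub f fb g gb = ((1*j)*u*ub*f*fb*l^3*lb^2*h^3 + -2*u*ub*f*fb*l^3*h^2 + 2*u*ub*f*fb*l*lb^2*h^2 + (4*j)*u*ub*f*fb*l*h + (1*j)*u*ub*g*gb*l^2*lb^3*h^3 + 2*u*ub*g*gb*l^2*lb*h^2 + -2*u*ub*g*gb*lb^3*h^2 + (4*j)*u*ub*g*gb*lb*h + (-8*j)*u*fb*g*l^2*h + (8*j)*u*fb*g*lb^2*h + 4*ub*f*gb*l^3*lb*h^2 + -4*ub*f*gb*l*lb^3*h^2 + 2*f*fb*l^3*lb^2*h^2 + (-4*j)*f*fb*l^3*h + (4*j)*f*fb*l*lb^2*h + 8*f*fb*l + 2*g*gb*l^2*lb^3*h^2 + (4*j)*g*gb*l^2*lb*h + (-4*j)*g*gb*lb^3*h + 8*g*gb*lb)"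

definition MrP :: "complex\<Rightarrow>complex\<Rightarrow>complex\<Rightarrow>complex\<Rightarrow>complex\<Rightarrow>complex\<Rightarrow>complex\<Rightarrow>complex\<Rightarrow>complex\<Rightarrow>complex\<Rightarrow>complex\<Rightarrow>complex" where
  "MrP j h l lb u ub r f fb g gb = ((-1*j)*u*ub*r*f*fb*l^2*lb^3*h^3 + 2*u*ub*r*f*fb*l^2*lb*h^2 + -2*u*ub*r*f*fb*lb^3*h^2 + (-4*j)*u*ub*r*f*fb*lb*h + (-1*j)*u*ub*r*g*gb*l^3*lb^2*h^3 + -2*u*ub*r*g*gb*l^3*h^2 + 2*u*ub*r*g*gb*l*lb^2*h^2 + (-4*j)*u*ub*r*g*gb*l*h + (-1*j)*u*ub*f*gb*l^4*lb^2*h^3 + -2*u*ub*f*gb*l^4*h^2 + (1*j)*u*ub*f*gb*l^2*lb^4*h^3 + (4*j)*u*ub*f*gb*l^2*h + 2*u*ub*f*gb*lb^4*h^2 + (-4*j)*u*ub*f*gb*lb^2*h + -4*u*r*fb*g*l^3*lb*h^2 + 4*u*r*fb*g*l*lb^3*h^2 + -4*u*f*fb*l^4*lb*h^2 + -16*u*f*fb*lb + -4*u*g*gb*l*lb^4*h^2 + -16*u*g*gb*l + (-8*j)*ub*r*f*gb*l^2*h + (8*j)*ub*r*f*gb*lb^2*h + 2*r*f*fb*l^2*lb^3*h^2 + (-4*j)*r*f*fb*l^2*lb*h + (4*j)*r*f*fb*lb^3*h + 8*r*f*fb*lb + 2*r*g*gb*l^3*lb^2*h^2 + (4*j)*r*g*gb*l^3*h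 + (-4*j)*r*g*gb*l*lb^2*h + 8*r*g*gb*l + 2*f*gb*l^4*lb^2*h^2 + (4*j)*f*gb*l^4*h + -2*f*gb*l^2*lb^4*h^2 + -8*f*gb*l^2 + (-4*j)*f*gb*lb^4*h + 8*f*gb*lb^2)"

definition MqP :: "complex\<Rightarrow>complex\<Rightarrow>complex\<Rightarrow>complex\<Rightarrow>complex\<Rightarrow>complex\<Rightarrow>complex\<Rightarrow>complex\<Rightarrow>complex\<Rightarrow>complex\<Rightarrow>complex\<Rightarrow>complex" where
  "MqP j h l lb u ub q f fb g gb = ((-1*j)*u*ub*q*f*fb*l^4*lb^3*h^3 + 2*u*ub*q*f*fb*l^4*lb*h^2 + -2*u*ub*q*f*fb*l^2*lb^3*h^2 + (-4*j)*u*ub*q*f*fb*l^2*lb*h + (-1*j)*u*ub*q*g*gb*l^3*lb^4*h^3 + -2*u*ub*q*g*gb*l^3*lb^2*h^2 + 2*u*ub*q*g*gb*l*lb^4*h^2 + (-4*j)*u*ub*q*g*gb*l*lb^2*h + (1*j)*u*ub*f*gb*l^4*lb^2*h^3 + 2*u*ub*f*gb*l^4*h^2 + (-1*j)*u*ub*f*gb*l^2*lb^4*h^3 + (-4*j)*u*ub*f*gb*l^2*h + -2*u*ub*f*gb*lb^4*h^2 + (4*j)*u*ub*f*gb*lb^2*h + (8*j)*u*q*fb*g*l^3*lb*h + (-8*j)*u*q*fb*g*l*lb^3*h + (2*j)*u*f*fb*l^4*lb^3*h^3 + (8*j)*u*f*fb*lb^3*h + (2*j)*u*g*gb*l^3*lb^4*h^3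 + (8*j)*u*g*gb*l^3*h + -4*ub*q*f*gb*l^4*lb^2*h^2 + 4*ub*q*f*gb*l^2*lb^4*h^2 + -2*q*f*fb*l^4*lb^3*h^2 + (4*j)*q*f*fb*l^4*lb*h + (-4*j)*q*f*fb*l^2*lb^3*h + -8*q*f*fb*l^2*lb + -2*q*g*gb*l^3*lb^4*h^2 + (-4*j)*q*g*gb*l^3*lb^2*h + (4*j)*q*g*gb*l*lb^4*h + -8*q*g*gb*l*lb^2 + 2*f*gb*l^4*lb^2*h^2 + (4*j)*f*gb*l^4*h + -2*f*gb*l^2*lb^4*h^2 + -8*f*gb*l^2 + (-4*j)*f*gb*lb^4*h + 8*f*gb*lb^2)"

definition Nu_u :: "complex\<Rightarrow>complex\<Rightarrow>complex\<Rightarrow>complex\<Rightarrow>complex\<Rightarrow>complex\<Rightarrow>complex\<Rightarrow>complex\<Rightarrow>complex\<Rightarrow>complex" where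
  "Nu_u j h l lb u f fb g gb = (1*f*fb*l^2*lb*h + (-2*j)*f*fb*lb + 1*g*gb*l*lb^2*h + (-2*j)*g*gb*l)"

definition Nu_f :: "complex\<Rightarrow>complex\<Rightarrow>complex\<Rightarrow>complex\<Rightarrow>complex\<Rightarrow>complex\<Rightarrow>complex\<Rightarrow>complex\<Rightarrow>complex\<Rightarrow>complex" where
  "Nu_f j h l lb u f fb g gb = (1*u*fb*l^2*lb*h + (-2*j)*u*fb*lb + (-2*j)*gb*l^2 + (2*j)*gb*lb^2)"

definition Nu_fb :: "complex\<Rightarrow>complex\<Rightarrow>complex\<Rightarrow>complex\<Rightarrow>complex\<Rightarrow>complex\<Rightarrow>complex\<Rightarrow>complex\<Rightarrow>complex\<Rightarrow>complex" where
  "Nu_fb j h l lb u f fb g gb = (1*u*f*l^2*lb*h + (-2*j)*u*f*lb)"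

definition Nu_g :: "complex\<Rightarrow>complex\<Rightarrow>complex\<Rightarrow>complex\<Rightarrow>complex\<Rightarrow>complex\<Rightarrow>complex\<Rightarrow>complex\<Rightarrow>complex\<Rightarrow>complex" where
  "Nu_g j h l lb u f fb g gb = (1*u*gb*l*lb^2*h + (-2*j)*u*gb*l)"

definition Nu_gb :: "complex\<Rightarrow>complex\<Rightarrow>complex\<Rightarrow>complex\<Rightarrow>complex\<Rightarrow>complex\<Rightarrow>complex\<Rightarrow>complex\<Rightarrow>complex\<Rightarrow>complex" where
  "Nu_gb j h l lb u f fb g gb = (1*u*g*l*lb^2*h + (-2*j)*u*g*l + (-2*j)*f*l^2 + (2*j)*f*lb^2)"

definition Ud_u :: "complex\<Rightarrow>complex\<Rightarrow>complex\<Rightarrow>complex\<Rightarrow>complex\<Rightarrow>complex\<Rightarrow>complex\<Rightarrow>complex\<Rightarrow>complex\<Rightarrow>complex" where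
  "Ud_u j h l lb u f fb g gb = (1*fb*g*l^2*h + -1*fb*g*lb^2*h)"

definition Ud_f :: "complex\<Rightarrow>complex\<Rightarrow>complex\<Rightarrow>complex\<Rightarrow>complex\<Rightarrow>complex\<Rightarrow>complex\<Rightarrow>complex\<Rightarrow>complex\<Rightarrow>complex" where
  "Ud_f j h l lb u f fb g gb = (-1*fb*l*lb^2*h + (2*j)*fb*l)"

definition Ud_fb :: "complex\<Rightarrow>complex\<Rightarrow>complex\<Rightarrow>complex\<Rightarrow>complex\<Rightarrow>complex\<Rightarrow>complex\<Rightarrow>complex\<Rightarrow>complex\<Rightarrow>complex" where
  "Ud_fb j h l lb u f fb g gb = (1*u*g*l^2*h + -1*u*g*lb^2*h + -1*f*l*lb^2*h + (2*j)*f*l)"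

definition Ud_g :: "complex\<Rightarrow>complex\<Rightarrow>complex\<Rightarrow>complex\<Rightarrow>complex\<Rightarrow>complex\<Rightarrow>complex\<Rightarrow>complex\<Rightarrow>complex\<Rightarrow>complex" where
  "Ud_g j h l lb u f fb g gb = (1*u*fb*l^2*h + -1*u*fb*lb^2*h + -1*gb*l^2*lb*h + (2*j)*gb*lb)"

definition Ud_gb :: "complex\<Rightarrow>complex\<Rightarrow>complex\<Rightarrow>complex\<Rightarrow>complex\<Rightarrow>complex\<Rightarrow>complex\<Rightarrow>complex\<Rightarrow>complex\<Rightarrow>complex" where
  "Ud_gb j h l lb u f fb g gb = (-1*g*l^2*lb*h + (2*j)*g*lb)"
definition TpP :: "complex \<Rightarrow> complex \<Rightarrow> complex \<Rightarrow> complex \<Rightarrow> complex \<Rightarrow> complex \<Rightarrow> complex \<Rightarrow> complex \<Rightarrow> complex" where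
  "TpP j h u ub r rb q qb = 2*h*u*u*rb + j*h*h*u*u*qb - 2*h*u*r*rb - 2*h*u*q*qb - j*h*h*u + 4*j*u - 4*j*r + 2*h*q"
definition FDP :: "complex \<Rightarrow> complex \<Rightarrow> complex \<Rightarrow> complex \<Rightarrow> complex \<Rightarrow> complex \<Rightarrow> complex \<Rightarrow> complex" where
  "FDP j l r rb q f g = j*((l*l*l-l*r*rb)*f+(l*l*r-q)*g)"
definition GDP :: "complex \<Rightarrow> complex \<Rightarrow> complex \<Rightarrow> complex \<Rightarrow> complex \<Rightarrow> complex \<Rightarrow> complex \<Rightarrow> complex" where
  "GDP j l rb q qb f g = j*((l*l*l*rb-l*qb)*f+(l*l*q*qb-1)*g)"
definition FBDP :: "complex \<Rightarrow> complex \<Rightarrow> complex \<Rightarrow> complex \<Rightarrow> complex \<Rightarrow> complex \<Rightarrow> complex \<Rightarrow> complex" where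
  "FBDP j lb r rb qb fb gb = -j*((lb*lb*lb-lb*r*rb)*fb+(lb*lb*rb-qb)*gb)"
definition GBDP :: "complex \<Rightarrow> complex \<Rightarrow> complex \<Rightarrow> complex \<Rightarrow> complex \<Rightarrow> complex \<Rightarrow> complex \<Rightarrow> complex" where
  "GBDP j lb r q qb fb gb = -j*((lb*lb*lb*r-lb*q)*fb+(lb*lb*q*qb-1)*gb)"
lemma KL: assumes "j*j = -1"
  shows "Rd0P l lb f fb g gb * K2P j h l lb u ub f fb g gb = 2 * UdP j h l lb u f fb g gb * UdbP j h l lb ub f fb g gb - j*h*NuP j h l lb u f fb g gb * NubP j h l lb ub f fb g gb"
  using assms unfolding Rd0P_def K2P_def UdP_def UdbP_def NuP_def NubP_def by algebra

lemma KLb: assumes "j*j = -1"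
  shows "Rd0bP l lb f fb g gb * K2bP j h l lb u ub f fb g gb = 2 * UdP j h l lb u f fb g gb * UdbP j h l lb ub f fb g gb + j*h*NuP j h l lb u f fb g gb * NubP j h l lb ub f fb g gb"
  using assms unfolding Rd0bP_def K2bP_def UdP_def UdbP_def NuP_def NubP_def by algebra

lemma ZL: assumes "j*j = -1"
  shows "l*F1P j h l u ub f g*F1bP j h lb u ub fb gb + lb*G1P j h l u ub f g*G1bP j h lb u ub fb gb = s2P j h u ub * K2bP j h l lb u ub f fb g gb"
  using assms unfolding F1P_def G1P_def F1bP_def G1bP_def s2P_def sb2P_def K2bP_def by algebra

lemma ZLb: assumes "j*j = -1"
  shows "lb*F1P j h l u ub f g*F1bP j h lb u ub fb gb + l*G1P j h l u ub f g*G1bP j h lb u ub fb gb = sb2P j h u ub * K2P j h l lb u ub f fb g gb"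
  using assms unfolding F1P_def G1P_def F1bP_def G1bP_def s2P_def sb2P_def K2P_def by algebra

lemma MrL: assumes "j*j = -1"
  shows "K2P j h l lb u ub f fb g gb * (4*u - s2P j h u ub * r) + (l*l-lb*lb) * F1P j h l u ub f g * G1bP j h lb u ub fb gb = - (s2P j h u ub * MrP j h l lb u ub r f fb g gb)"
  using assms unfolding F1P_def G1bP_def s2P_def sb2P_def K2P_def MrP_def by algebra

lemma MqL: assumes "j*j = -1"
  shows "l*lb*K2bP j h l lb u ub f fb g gb * (sb2P j h u ub * q - 2*j*h*u) + (l*l-lb*lb) * F1P j h l u ub f g * G1bP j h lb u ub fb gb = - (sb2P j h u ub * MqP j h l lb u ub q f fb g gb)"
  using assms unfolding F1P_def G1bP_def s2P_def sb2P_def K2bP_def MqP_def by algebra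

lemma E3L: assumes "j*j = -1"
  shows "MrP j h l lb u ub r f fb g gb * Rd0bP l lb f fb g gb + R0nP l lb r f fb g gb * K2P j h l lb u ub f fb g gb = 4 * NuP j h l lb u f fb g gb * UdbP j h l lb ub f fb g gb"
  using assms unfolding MrP_def Rd0bP_def R0nP_def K2P_def NuP_def UdbP_def s2P_def by algebra

lemma E2L: assumes "j*j = -1"
  shows "- j * Rd0P l lb f fb g gb * (MqP j h l lb u ub q f fb g gb * Rd0bP l lb f fb g gb - Q0nP l lb q f fb g gb * K2P j h l lb u ub f fb g gb) + 2*h*l*lb*NuP j h l lb u f fb g gb * UdbP j h l lb ub f fb g gb * Rd0bP l lb f fb g gb - 2*h*NuP j h l lb u f fb g gb * NubP j h l lb ub f fb g gb * Q0nP l lb q f fb g gb = 0"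
  using assms unfolding MqP_def Rd0bP_def Rd0P_def Q0nP_def K2P_def NuP_def UdbP_def NubP_def by algebra
lemma E1L: assumes "j*j = -1"
  shows "j*((Nu_u j h l lb u f fb g gb*(j*TpP j h u ub r rb q qb)*(4*l*l*lb*lb) + Nu_f j h l lb u f fb g gb*FDP j l r rb q f g*(8*h*l*lb*lb)
       + Nu_g j h l lb u f fb g gb*GDP j l rb q qb f g*(8*h*lb*lb) + Nu_fb j h l lb u f fb g gb*FBDP j lb r rb qb fb gb*(8*h*l*l*lb)
       + Nu_gb j h l lb u f fb g gb*GBDP j lb r q qb fb gb*(8*h*l*l))*UdP j h l lb u f fb g gb
     - NuP j h l lb u f fb g gb*(Ud_u j h l lb u f fb g gb*(j*TpP j h u ub r rb q qb)*(4*l*l*lb*lb) + Ud_f j h l lb u f fb g gb*FDP j l r rb q f g*(8*h*l*lb*lb)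
       + Ud_g j h l lb u f fb g gb*GDP j l rb q qb f g*(8*h*lb*lb) + Ud_fb j h l lb u f fb g gb*FBDP j lb r rb qb fb gb*(8*h*l*l*lb)
       + Ud_gb j h l lb u f fb g gb*GBDP j lb r q qb fb gb*(8*h*l*l)))*Rd0P l lb f fb g gb*Rd0bP l lb f fb g gb
   + 4*(2*NuP j h l lb u f fb g gb*NuP j h l lb u f fb g gb*R0nbP l lb rb f fb g gb*Rd0P l lb f fb g gb*l*l*lb*lb*h
     + j*h*NuP j h l lb u f fb g gb*NuP j h l lb u f fb g gb*Q0nbP l lb qb f fb g gb*Rd0bP l lb f fb g gb*l*lb*h
     - 2*NuP j h l lb u f fb g gb*UdP j h l lb u f fb g gb*R0nP l lb r f fb g gb*R0nbP l lb rb f fb g gb*l*l*lb*lb*h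
     - 2*NuP j h l lb u f fb g gb*UdP j h l lb u f fb g gb*Q0nP l lb q f fb g gb*Q0nbP l lb qb f fb g gb*h
     - j*h*NuP j h l lb u f fb g gb*UdP j h l lb u f fb g gb*Rd0P l lb f fb g gb*Rd0bP l lb f fb g gb*l*l*lb*lb*h
     + 4*j*(NuP j h l lb u f fb g gb*Rd0P l lb f fb g gb-R0nP l lb r f fb g gb*UdP j h l lb u f fb g gb)*UdP j h l lb u f fb g gb*Rd0bP l lb f fb g gb*l*l*lb*lb
     + 2*Q0nP l lb q f fb g gb*UdP j h l lb u f fb g gb*UdP j h l lb u f fb g gb*Rd0P l lb f fb g gb*l*lb*h) = 0"
  using assms unfolding Nu_u_def Nu_f_def Nu_g_def Nu_fb_def Nu_gb_def Ud_u_def Ud_f_def Ud_g_def Ud_fb_def Ud_gb_def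
    TpP_def FDP_def GDP_def FBDP_def GBDP_def NuP_def UdP_def R0nP_def R0nbP_def Q0nP_def Q0nbP_def Rd0P_def Rd0bP_def
  by algebra
definition T0F :: "complex \<Rightarrow> complex \<Rightarrow> complex \<Rightarrow> complex \<Rightarrow> complex \<Rightarrow> complex \<Rightarrow> complex \<Rightarrow> complex" where
  "T0F j h u r rb q qb = 2*u*u*rb + j*h*u*u*qb - 2*u*r*rb - 2*u*q*qb - j*h*u + 4*j*(u - r)/h + 2*q"

lemma Comb3:
  fixes u1 u1b r10 r11 Nu Ud Nub Udb Rd0 Rd0b R0n K2 K2b Mr j h :: complex
  assumes "u1 = Nu/Ud" "u1b = Nub/Udb" "r10 = R0n/Rd0" "r11 = Mr/K2b"
    and "Ud \<noteq> 0" "Udb \<noteq> 0" "Rd0 \<noteq> 0" "K2b \<noteq> 0"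
    and KL: "Rd0*K2 = 2*Ud*Udb - j*h*Nu*Nub" and KLb: "Rd0b*K2b = 2*Ud*Udb + j*h*Nu*Nub"
    and E3L: "Mr*Rd0b + R0n*K2 = 4*Nu*Udb"
  shows "r11 + r10 - 2*u1 + (j*h/2)*(u1*u1b)*(r11 - r10) = 0"
proof -
  have "2*Ud*Udb*Rd0*K2b*(r11 + r10 - 2*u1 + (j*h/2)*(u1*u1b)*(r11 - r10))
     = Mr*Rd0*(2*Ud*Udb + j*h*Nu*Nub) + R0n*K2b*(2*Ud*Udb - j*h*Nu*Nub) - 4*Nu*Udb*Rd0*K2b"
    using assms(5-8) unfolding assms(1-4) by (simp add: field_simps; algebra?)
  also have "\<dots> = Rd0*K2b*(Mr*Rd0b + R0n*K2 - 4*Nu*Udb)"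
    unfolding KL[symmetric] KLb[symmetric] by algebra
  also have "\<dots> = 0" using E3L by simp
  finally show ?thesis using assms(5-8) by simp
qed

lemma Comb2:
  fixes u1 u1b q10 q11 Nu Ud Nub Udb Rd0 Rd0b Q0n K2 Mq j h l lb :: complex
  assumes "u1 = Nu/Ud" "u1b = Nub/Udb" "q10 = Q0n/(l*lb*Rd0b)" "q11 = Mq/(l*lb*K2)"
    and "Ud \<noteq> 0" "Udb \<noteq> 0" "Rd0b \<noteq> 0" "K2 \<noteq> 0" "l \<noteq> 0" "lb \<noteq> 0" "h \<noteq> 0"
    and j: "j*j = -1"
    and KL: "Rd0*K2 = 2*Ud*Udb - j*h*Nu*Nub"
    and E2L: "- j*Rd0*(Mq*Rd0b - Q0n*K2) + 2*h*l*lb*Nu*Udb*Rd0b - 2*h*Nu*Nub*Q0n = 0"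
  shows "- (2*j/h)*(q11 - q10) + 2*u1 - (u1*u1b)*(q11 + q10) = 0"
proof -
  have "h*l*lb*Ud*Udb*Rd0b*K2*(- (2*j/h)*(q11 - q10) + 2*u1 - (u1*u1b)*(q11 + q10))
     = -j*(2*Ud*Udb)*(Mq*Rd0b - Q0n*K2) + 2*h*l*lb*Nu*Udb*Rd0b*K2 - h*Nu*Nub*(Mq*Rd0b + Q0n*K2)"
    using assms(5-11) unfolding assms(1-4) by (simp add: field_simps; algebra?)
  also have "\<dots> = K2*(- j*Rd0*(Mq*Rd0b - Q0n*K2) + 2*h*l*lb*Nu*Udb*Rd0b - 2*h*Nu*Nub*Q0n)"
    using KL j by algebra
  also have "\<dots> = 0" using E2L by simp
  finally show ?thesis using assms(5-11) by simp
qed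

lemma RED0:
  fixes u ub r0 r0b r1 r1b q0 q0b q1 q1b h j D s sb :: complex
  assumes j: "j*j = -1" and h: "h \<noteq> 0"
    and sd: "s = 2 - j*h*u*ub" "sb = 2 + j*h*u*ub" and snz: "s \<noteq> 0" "sb \<noteq> 0"
    and r1: "r1 = (4*u - s*r0)/sb" and r1b: "r1b = (4*ub - sb*r0b)/s"
    and q1: "q1 = (sb*q0 - 2*j*h*u)/s" and q1b: "q1b = (s*q0b + 2*j*h*ub)/sb"
  shows "4*j*D + q1 + q0 + (2*j/h)*(r1 - r0) + u^2*(r0b + r1b) - u*(q1*q1b + q0*q0b + r1*r1b + r0*r0b) - (j*h/2)*u^2*(q1b - q0b)
     = 4*j*D + T0F j h u r0 r0b q0 q0b"
  unfolding r1 r1b q1 q1b T0F_def using snz h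
  apply (simp add: field_simps)
  apply (thin_tac "_ \<noteq> _")+
  using j sd apply algebra
  done

lemma RED:
  fixes u ub r0 r0b r1 r1b q0 q0b q1 q1b h j D :: complex
  assumes j: "j*j = -1" and h: "h \<noteq> 0"
    and s: "2 - j*h*u*ub \<noteq> 0" "2 + j*h*u*ub \<noteq> 0"
    and E3: "r1 + r0 - 2*u + (j*h/2)*(u*ub)*(r1 - r0) = 0"
    and E3b: "r1b + r0b - 2*ub + (-j*h/2)*(u*ub)*(r1b - r0b) = 0"
    and E2: "- (2*j/h)*(q1 - q0) + 2*u - (u*ub)*(q1 + q0) = 0"
    and E2b: "- (-2*j/h)*(q1b - q0b) + 2*ub - (u*ub)*(q1b + q0b) = 0"
  shows "4*j*D + q1 + q0 + (2*j/h)*(r1 - r0) + u^2*(r0b + r1b) - u*(q1*q1b + q0*q0b + r1*r1b + r0*r0b) - (j*h/2)*u^2*(q1b - q0b)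
     = 4*j*D + T0F j h u r0 r0b q0 q0b"
proof -
  define S where "S = 2 - j*h*u*ub"
  define Sb where "Sb = 2 + j*h*u*ub"
  have Snz: "S \<noteq> 0" "Sb \<noteq> 0" using s S_def Sb_def by auto
  have "Sb*r1 = 4*u - S*r0"
  proof -
    have "Sb*r1 - (4*u - S*r0) = 2*(r1 + r0 - 2*u + (j*h/2)*(u*ub)*(r1 - r0))"
      unfolding S_def Sb_def by (simp add: field_simps)
    thus ?thesis by (simp only: E3 mult_zero_right right_minus_eq)
  qed
  hence r1: "r1 = (4*u - S*r0)/Sb" using Snz by (simp add: field_simps)
  have "S*r1b = 4*ub - Sb*r0b"
  proof -
    have "S*r1b - (4*ub - Sb*r0b) = 2*(r1b + r0b - 2*ub + (-j*h/2)*(u*ub)*(r1b - r0b))"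
      unfolding S_def Sb_def by (simp add: field_simps)
    thus ?thesis by (simp only: E3b mult_zero_right right_minus_eq)
  qed
  hence r1b: "r1b = (4*ub - Sb*r0b)/S" using Snz by (simp add: field_simps)
  have "S*q1 = Sb*q0 - 2*j*h*u"
  proof -
    have "j*(S*q1 - (Sb*q0 - 2*j*h*u)) = - h*(- (2*j/h)*(q1 - q0) + 2*u - (u*ub)*(q1 + q0))"
      unfolding S_def Sb_def using h j by (simp add: field_simps; algebra?)
    hence "j*(S*q1 - (Sb*q0 - 2*j*h*u)) = 0" by (simp only: E2 mult_zero_right minus_zero)
    moreover have "j \<noteq> 0" using j by auto
    ultimately show ?thesis by simp
  qed
  hence q1: "q1 = (Sb*q0 - 2*j*h*u)/S" using Snz by (simp add: field_simps)
  have "Sb*q1b = S*q0b + 2*j*h*ub"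
  proof -
    have "j*(Sb*q1b - (S*q0b + 2*j*h*ub)) = h*(- (-2*j/h)*(q1b - q0b) + 2*ub - (u*ub)*(q1b + q0b))"
      unfolding S_def Sb_def using h j by (simp add: field_simps; algebra?)
    hence "j*(Sb*q1b - (S*q0b + 2*j*h*ub)) = 0" by (simp only: E2b mult_zero_right)
    moreover have "j \<noteq> 0" using j by auto
    ultimately show ?thesis by simp
  qed
  hence q1b: "q1b = (S*q0b + 2*j*h*ub)/Sb" using Snz by (simp add: field_simps)
  show ?thesis by (rule RED0[OF j h S_def Sb_def Snz r1 r1b q1 q1b])
qed

lemma Comb1:
  fixes j h l lb Nu Ud Rd0 Rd0b R0n R0nb Q0n Q0nb u1 r10 r10b q10 q10b dN dU D fd fbd gd gbd TP FD GD FBD GBD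
    NuU NuF NuFb NuG NuGb UdU UdF UdFb UdG UdGb :: complex
  assumes sub: "u1 = Nu/Ud" "r10 = R0n/Rd0" "r10b = R0nb/Rd0b" "q10 = Q0n/(l*lb*Rd0b)" "q10b = Q0nb/(l*lb*Rd0)"
    and nz: "Ud \<noteq> 0" "Rd0 \<noteq> 0" "Rd0b \<noteq> 0" "l \<noteq> 0" "lb \<noteq> 0" "h \<noteq> 0"
    and hD: "4*h*D = j*TP" and hfd: "2*l*fd = FD" and hgd: "2*l*l*gd = GD" and hfbd: "2*lb*fbd = FBD" and hgbd: "2*lb*lb*gbd = GBD"
    and dN: "dN = NuU*D + NuF*fd + NuFb*fbd + NuG*gd + NuGb*gbd"
    and dU: "dU = UdU*D + UdF*fd + UdFb*fbd + UdG*gd + UdGb*gbd"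
    and E1: "j*((NuU*(j*TP)*(4*l*l*lb*lb) + NuF*FD*(8*h*l*lb*lb) + NuG*GD*(8*h*lb*lb) + NuFb*FBD*(8*h*l*l*lb) + NuGb*GBD*(8*h*l*l))*Ud
       - Nu*(UdU*(j*TP)*(4*l*l*lb*lb) + UdF*FD*(8*h*l*lb*lb) + UdG*GD*(8*h*lb*lb) + UdFb*FBD*(8*h*l*l*lb) + UdGb*GBD*(8*h*l*l)))*Rd0*Rd0b
     + 4*(2*Nu*Nu*R0nb*Rd0*l*l*lb*lb*h + j*h*Nu*Nu*Q0nb*Rd0b*l*lb*h - 2*Nu*Ud*R0n*R0nb*l*l*lb*lb*h
     - 2*Nu*Ud*Q0n*Q0nb*h - j*h*Nu*Ud*Rd0*Rd0b*l*l*lb*lb*h + 4*j*(Nu*Rd0-R0n*Ud)*Ud*Rd0b*l*l*lb*lb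
     + 2*Q0n*Ud*Ud*Rd0*l*lb*h) = 0"
  shows "4*j*((dN*Ud - Nu*dU)/(Ud*Ud)) + T0F j h u1 r10 r10b q10 q10b = 0"
proof -
  have sN: "16*h*l*l*lb*lb*dN = NuU*(j*TP)*(4*l*l*lb*lb) + NuF*FD*(8*h*l*lb*lb) + NuG*GD*(8*h*lb*lb) + NuFb*FBD*(8*h*l*l*lb) + NuGb*GBD*(8*h*l*l)"
    unfolding dN hD[symmetric] hfd[symmetric] hgd[symmetric] hfbd[symmetric] hgbd[symmetric] by algebra
  have sU: "16*h*l*l*lb*lb*dU = UdU*(j*TP)*(4*l*l*lb*lb) + UdF*FD*(8*h*l*lb*lb) + UdG*GD*(8*h*lb*lb) + UdFb*FBD*(8*h*l*l*lb) + UdGb*GBD*(8*h*l*l)"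
    unfolding dU hD[symmetric] hfd[symmetric] hgd[symmetric] hfbd[symmetric] hgbd[symmetric] by algebra
  have "4*(Ud*Ud*Rd0*Rd0b*l*l*lb*lb*h)*(4*j*((dN*Ud - Nu*dU)/(Ud*Ud)) + T0F j h u1 r10 r10b q10 q10b)
    = j*((16*h*l*l*lb*lb*dN)*Ud - Nu*(16*h*l*l*lb*lb*dU))*Rd0*Rd0b
     + 4*(2*Nu*Nu*R0nb*Rd0*l*l*lb*lb*h + j*h*Nu*Nu*Q0nb*Rd0b*l*lb*h - 2*Nu*Ud*R0n*R0nb*l*l*lb*lb*h
     - 2*Nu*Ud*Q0n*Q0nb*h - j*h*Nu*Ud*Rd0*Rd0b*l*l*lb*lb*h + 4*j*(Nu*Rd0-R0n*Ud)*Ud*Rd0b*l*l*lb*lb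
     + 2*Q0n*Ud*Ud*Rd0*l*lb*h)"
    unfolding sub T0F_def using nz
    by (simp add: field_simps)
  also have "\<dots> = 0" unfolding sN sU by (rule E1)
  finally show ?thesis using nz by simp
qed
lemma NextR:
  fixes F1 F1b G1 G1b r1 r u h l lb P1 P1b Q1 Q1b S Sb K2 K2b Mr :: complex
  assumes sub: "F1 = P1/(h*l*S)" "F1b = P1b/(h*lb*Sb)" "G1 = Q1/(h*l*S)" "G1b = Q1b/(h*lb*Sb)" "r1 = (4*u - S*r)/Sb"
    and nz: "h \<noteq> 0" "l \<noteq> 0" "lb \<noteq> 0" "S \<noteq> 0" "Sb \<noteq> 0"
    and dnz: "l*(F1*F1b) + lb*(G1*G1b) \<noteq> 0"
    and ZL: "l*P1*P1b + lb*Q1*Q1b = S*K2b" and ZLb: "lb*P1*P1b + l*Q1*Q1b = Sb*K2"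
    and MrL: "K2*(4*u - S*r) + (l*l-lb*lb)*P1*Q1b = -(S*Mr)"
  shows "K2b \<noteq> 0" "-((lb*(F1*F1b) + l*(G1*G1b))*r1 + (l*l-lb*lb)*F1*G1b) / (l*(F1*F1b) + lb*(G1*G1b)) = Mr/K2b"
proof -
  have den: "l*(F1*F1b) + lb*(G1*G1b) = K2b/(h*h*l*lb*Sb)"
  proof -
    have "l*(F1*F1b) + lb*(G1*G1b) = (l*P1*P1b + lb*Q1*Q1b)/(h*h*l*lb*S*Sb)"
      unfolding sub using nz by (simp add: field_simps)
    also have "\<dots> = K2b/(h*h*l*lb*Sb)" unfolding ZL using nz by (simp add: field_simps)
    finally show ?thesis .
  qed
  show K: "K2b \<noteq> 0" using dnz den by auto
  have num: "-((lb*(F1*F1b) + l*(G1*G1b))*r1 + (l*l-lb*lb)*F1*G1b) = Mr/(h*h*l*lb*Sb)"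
  proof -
    have "-((lb*(F1*F1b) + l*(G1*G1b))*r1 + (l*l-lb*lb)*F1*G1b)
        = -(((lb*P1*P1b + l*Q1*Q1b)/(h*h*l*lb*S*Sb))*r1 + (l*l-lb*lb)*P1*Q1b/(h*h*l*lb*S*Sb))"
      unfolding sub(1-4) using nz by (simp add: field_simps)
    also have "\<dots> = -((K2*(4*u - S*r) + (l*l-lb*lb)*P1*Q1b)/(h*h*l*lb*S*Sb))"
      unfolding ZLb sub(5) using nz by (simp add: field_simps)
    also have "\<dots> = Mr/(h*h*l*lb*Sb)" unfolding MrL using nz by (simp add: field_simps)
    finally show ?thesis .
  qed
  show "-((lb*(F1*F1b) + l*(G1*G1b))*r1 + (l*l-lb*lb)*F1*G1b) / (l*(F1*F1b) + lb*(G1*G1b)) = Mr/K2b"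
    unfolding num den using nz K by (simp add: field_simps)
qed

lemma NextQ:
  fixes F1 F1b G1 G1b q1 q u h l lb j P1 P1b Q1 Q1b S Sb K2 K2b Mq :: complex
  assumes sub: "F1 = P1/(h*l*S)" "F1b = P1b/(h*lb*Sb)" "G1 = Q1/(h*l*S)" "G1b = Q1b/(h*lb*Sb)" "q1 = (Sb*q - 2*j*h*u)/S"
    and nz: "h \<noteq> 0" "l \<noteq> 0" "lb \<noteq> 0" "S \<noteq> 0" "Sb \<noteq> 0"
    and dnz: "(l*lb)*(lb*(F1*F1b) + l*(G1*G1b)) \<noteq> 0"
    and ZL: "l*P1*P1b + lb*Q1*Q1b = S*K2b" and ZLb: "lb*P1*P1b + l*Q1*Q1b = Sb*K2"
    and MqL: "l*lb*K2b*(Sb*q - 2*j*h*u) + (l*l-lb*lb)*P1*Q1b = -(Sb*Mq)"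
  shows "K2 \<noteq> 0" "-((l*lb)*(l*(F1*F1b) + lb*(G1*G1b))*q1 + (l*l-lb*lb)*F1*G1b) / ((l*lb)*(lb*(F1*F1b) + l*(G1*G1b))) = Mq/(l*lb*K2)"
proof -
  have den: "(l*lb)*(lb*(F1*F1b) + l*(G1*G1b)) = K2/(h*h*S)"
  proof -
    have "(l*lb)*(lb*(F1*F1b) + l*(G1*G1b)) = (l*lb)*(lb*P1*P1b + l*Q1*Q1b)/(h*h*l*lb*S*Sb)"
      unfolding sub using nz by (simp add: field_simps)
    also have "\<dots> = K2/(h*h*S)" unfolding ZLb using nz by (simp add: field_simps)
    finally show ?thesis .
  qed
  show K: "K2 \<noteq> 0" using dnz den by auto
  have num: "-((l*lb)*(l*(F1*F1b) + lb*(G1*G1b))*q1 + (l*l-lb*lb)*F1*G1b) = Mq/(h*h*l*lb*S)"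
  proof -
    have "-((l*lb)*(l*(F1*F1b) + lb*(G1*G1b))*q1 + (l*l-lb*lb)*F1*G1b)
        = -((l*lb)*((l*P1*P1b + lb*Q1*Q1b)/(h*h*l*lb*S*Sb))*q1 + (l*l-lb*lb)*P1*Q1b/(h*h*l*lb*S*Sb))"
      unfolding sub(1-4) using nz by (simp add: field_simps)
    also have "\<dots> = -((l*lb*K2b*(Sb*q - 2*j*h*u) + (l*l-lb*lb)*P1*Q1b)/(h*h*l*lb*S*Sb))"
      unfolding ZL sub(5) using nz by (simp add: field_simps)
    also have "\<dots> = Mq/(h*h*l*lb*S)" unfolding MqL using nz by (simp add: field_simps)
    finally show ?thesis .
  qed
  show "-((l*lb)*(l*(F1*F1b) + lb*(G1*G1b))*q1 + (l*l-lb*lb)*F1*G1b) / ((l*lb)*(lb*(F1*F1b) + l*(G1*G1b))) = Mq/(l*lb*K2)"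
    unfolding num den using nz K by (simp add: field_simps)
qed

lemma QD:
  fixes N D :: "real \<Rightarrow> complex"
  assumes "(N has_vector_derivative N') (at t)" "(D has_vector_derivative D') (at t)" "D t \<noteq> 0"
  shows "((\<lambda>s. N s / D s) has_vector_derivative ((N'*D t - N t*D')/(D t * D t))) (at t)"
proof -
  have "((\<lambda>s. N s / D s) has_derivative (\<lambda>h. ((h *\<^sub>R N') * D t - N t * (h *\<^sub>R D')) / (D t * D t))) (at t)"
    using has_derivative_divide'[OF assms(1)[unfolded has_vector_derivative_def] assms(2)[unfolded has_vector_derivative_def] assms(3)] .
  moreover have "(\<lambda>h. ((h *\<^sub>R N') * D t - N t * (h *\<^sub>R D')) / (D t * D t)) = (\<lambda>h. h *\<^sub>R ((N'*D t - N t*D')/(D t * D t)))"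
    by (rule ext) (simp add: scaleR_conv_of_real field_simps)
  ultimately show ?thesis unfolding has_vector_derivative_def by simp
qed

lemma diff_cnj_at: "(f::real\<Rightarrow>complex) differentiable (at t) \<Longrightarrow> (\<lambda>s. cnj (f s)) differentiable (at t)"
  using has_vector_derivative_cnj differentiableI_vector vector_derivative_works by blast


lemma asq_eq: "asq z = z * cnj z"
  unfolding asq_def by (rule complex_norm_square)

lemma s_nz: "2 - \<i> * complex_of_real h * z * cnj z \<noteq> 0" "2 + \<i> * complex_of_real h * z * cnj z \<noteq> 0"
proof -
  have "z * cnj z = complex_of_real ((cmod z)^2)" by (rule complex_norm_square[symmetric])
  hence e: "\<i> * complex_of_real h * z * cnj z = \<i> * complex_of_real (h * (cmod z)^2)"
    by (simp add: mult.assoc)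
  show "2 - \<i> * complex_of_real h * z * cnj z \<noteq> 0"
  proof
    assume "2 - \<i> * complex_of_real h * z * cnj z = 0"
    hence "Re (2 - \<i> * complex_of_real h * z * cnj z) = 0" by simp
    thus False unfolding e by simp
  qed
  show "2 + \<i> * complex_of_real h * z * cnj z \<noteq> 0"
  proof
    assume "2 + \<i> * complex_of_real h * z * cnj z = 0"
    hence "Re (2 + \<i> * complex_of_real h * z * cnj z) = 0" by simp
    thus False unfolding e by simp
  qed
qed

lemma s2_nz: "s2P \<i> (complex_of_real h) z (cnj z) \<noteq> 0" "sb2P \<i> (complex_of_real h) z (cnj z) \<noteq> 0"
  unfolding s2P_def sb2P_def using s_nz by auto

lemma U1n_br: "U1_num h l u f g = NuP \<i> (complex_of_real h) l (cnj l) u f (cnj f) g (cnj g)"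
  unfolding U1_num_def NuP_def asq_eq by algebra
lemma U1d_br: "U1_den h l u f g = UdP \<i> (complex_of_real h) l (cnj l) u f (cnj f) g (cnj g)"
  unfolding U1_den_def UdP_def asq_eq by algebra
lemma U1n_cbr: "cnj (U1_num h l u f g) = NubP \<i> (complex_of_real h) l (cnj l) (cnj u) f (cnj f) g (cnj g)"
  unfolding U1_num_def NubP_def asq_eq by (simp; algebra?)
lemma U1d_cbr: "cnj (U1_den h l u f g) = UdbP \<i> (complex_of_real h) l (cnj l) (cnj u) f (cnj f) g (cnj g)"
  unfolding U1_den_def UdbP_def asq_eq by (simp; algebra?)
lemma R1n_br: "R1_num l r f g = R0nP l (cnj l) r f (cnj f) g (cnj g)"
  unfolding R1_num_def R0nP_def asq_eq by algebra
lemma R1n_cbr: "cnj (R1_num l r f g) = R0nbP l (cnj l) (cnj r) f (cnj f) g (cnj g)"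
  unfolding R1_num_def R0nbP_def asq_eq by (simp; algebra?)
lemma R1d_br: "R1_den l f g = Rd0P l (cnj l) f (cnj f) g (cnj g)"
  unfolding R1_den_def Rd0P_def asq_eq by simp
lemma R1d_cbr: "cnj (R1_den l f g) = Rd0bP l (cnj l) f (cnj f) g (cnj g)"
  unfolding R1_den_def Rd0bP_def asq_eq by (simp; algebra?)
lemma Q1n_br: "Q1_num l q f g = Q0nP l (cnj l) q f (cnj f) g (cnj g)"
  unfolding Q1_num_def Q0nP_def asq_eq by algebra
lemma Q1n_cbr: "cnj (Q1_num l q f g) = Q0nbP l (cnj l) (cnj q) f (cnj f) g (cnj g)"
  unfolding Q1_num_def Q0nbP_def asq_eq by (simp; algebra?)
lemma Q1d_br: "Q1_den l f g = l * cnj l * Rd0bP l (cnj l) f (cnj f) g (cnj g)"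
  unfolding Q1_den_def Rd0bP_def asq_eq by simp
lemma Q1d_cbr: "cnj (Q1_den l f g) = l * cnj l * Rd0P l (cnj l) f (cnj f) g (cnj g)"
  unfolding Q1_den_def Rd0P_def asq_eq by (simp; algebra?)

lemma F1P_cnj: "cnj (F1P \<i> (complex_of_real h) l u (cnj u) f g) = F1bP \<i> (complex_of_real h) (cnj l) u (cnj u) (cnj f) (cnj g)"
  unfolding F1P_def F1bP_def by (simp; algebra?)
lemma G1P_cnj: "cnj (G1P \<i> (complex_of_real h) l u (cnj u) f g) = G1bP \<i> (complex_of_real h) (cnj l) u (cnj u) (cnj f) (cnj g)"
  unfolding G1P_def G1bP_def by (simp; algebra?)
lemma s2P_cnj: "cnj (s2P \<i> (complex_of_real h) u (cnj u)) = sb2P \<i> (complex_of_real h) u (cnj u)"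
  unfolding s2P_def sb2P_def by (simp; algebra?)

lemma F_gen:
  fixes j h l u ub f g :: complex
  assumes j: "j*j = -1" and nz: "h \<noteq> 0" "l \<noteq> 0" "s2P j h u ub \<noteq> 0"
  shows "(l + 2*j/(h*l) * ((1 + j/2*h*(u*ub))/(1 - j/2*h*(u*ub)))) * f + 2*u/(1 - j/2*h*(u*ub)) * g
       = F1P j h l u ub f g/(h*l* s2P j h u ub)"
    "(2*ub/(1 - j/2*h*(u*ub))) * f + (2*j/(h*l) - l*((1 + j/2*h*(u*ub))/(1 - j/2*h*(u*ub)))) * g
       = G1P j h l u ub f g/(h*l* s2P j h u ub)"
proof -
  define S where "S = s2P j h u ub"
  define Sb where "Sb = sb2P j h u ub"
  have e1: "1 - j/2*h*(u*ub) = S/2" unfolding S_def s2P_def by (simp add: field_simps)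
  have e2: "1 + j/2*h*(u*ub) = Sb/2" unfolding Sb_def sb2P_def by (simp add: field_simps)
  have SnZ: "S \<noteq> 0" using nz S_def by simp
  have F: "F1P j h l u ub f g = (h*l*l*S + 2*j*Sb)*f + 4*h*l*u*g"
    unfolding F1P_def S_def Sb_def s2P_def sb2P_def by simp
  have G: "G1P j h l u ub f g = 4*h*l*ub*f + (2*j*S - h*l*l*Sb)*g"
    unfolding G1P_def S_def Sb_def s2P_def sb2P_def by simp
  show "(l + 2*j/(h*l) * ((1 + j/2*h*(u*ub))/(1 - j/2*h*(u*ub)))) * f + 2*u/(1 - j/2*h*(u*ub)) * g
       = F1P j h l u ub f g/(h*l* s2P j h u ub)"
    unfolding e1 e2 F S_def[symmetric] using SnZ nz by (simp add: field_simps; algebra?)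
  show "(2*ub/(1 - j/2*h*(u*ub))) * f + (2*j/(h*l) - l*((1 + j/2*h*(u*ub))/(1 - j/2*h*(u*ub)))) * g
       = G1P j h l u ub f g/(h*l* s2P j h u ub)"
    unfolding e1 e2 G S_def[symmetric] using SnZ nz by (simp add: field_simps; algebra?)
qed

lemma r1_sol:
  fixes j h u ub r r1 :: complex
  assumes "r1 + r - 2*u + (j*h/2)*(u*ub)*(r1 - r) = 0" "sb2P j h u ub \<noteq> 0"
  shows "r1 = (4*u - s2P j h u ub*r)/sb2P j h u ub"
proof -
  have "sb2P j h u ub*r1 - (4*u - s2P j h u ub*r) = 2*(r1 + r - 2*u + (j*h/2)*(u*ub)*(r1 - r))"
    unfolding s2P_def sb2P_def by (simp add: field_simps)
  hence "sb2P j h u ub*r1 = 4*u - s2P j h u ub*r" by (simp only: assms(1) mult_zero_right right_minus_eq)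
  thus ?thesis using assms(2) by (simp add: field_simps)
qed

lemma q1_sol:
  fixes j h u ub q q1 :: complex
  assumes j: "j*j = -1" and h: "h \<noteq> 0" and E: "- (2*j/h)*(q1 - q) + 2*u - (u*ub)*(q1 + q) = 0" and s: "s2P j h u ub \<noteq> 0"
  shows "q1 = (sb2P j h u ub*q - 2*j*h*u)/s2P j h u ub"
proof -
  have "j*(s2P j h u ub*q1 - (sb2P j h u ub*q - 2*j*h*u)) = - h*(- (2*j/h)*(q1 - q) + 2*u - (u*ub)*(q1 + q))"
    unfolding s2P_def sb2P_def using h j by (simp add: field_simps; algebra?)
  hence "j*(s2P j h u ub*q1 - (sb2P j h u ub*q - 2*j*h*u)) = 0" by (simp only: E mult_zero_right minus_zero)
  moreover have "j \<noteq> 0" using j by auto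
  ultimately have "s2P j h u ub*q1 = sb2P j h u ub*q - 2*j*h*u" by simp
  thus ?thesis using s by (simp add: field_simps)
qed

lemma FD_gen:
  fixes j l r rb q qb f g :: complex
  assumes "l \<noteq> 0"
  shows "2*l*(j/2*(l^2 - r*rb) * f + j/2*(l*r - q/l) * g) = FDP j l r rb q f g"
    "2*l*l*(j/2*(l*rb - qb/l) * f + j/2*(q*qb - 1/l^2) * g) = GDP j l rb q qb f g"
proof -
  show "2*l*(j/2*(l^2 - r*rb) * f + j/2*(l*r - q/l) * g) = FDP j l r rb q f g"
    unfolding FDP_def using assms by (simp add: field_simps power2_eq_square)
  have e: "1/l^2 = 1/(l*l)" by (simp add: power2_eq_square)
  show "2*l*l*(j/2*(l*rb - qb/l) * f + j/2*(q*qb - 1/l^2) * g) = GDP j l rb q qb f g"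
    unfolding GDP_def e using assms by (simp add: field_simps)
qed

lemma FDP_cnj: "cnj (FDP \<i> l r (cnj r) q f g) = FBDP \<i> (cnj l) r (cnj r) (cnj q) (cnj f) (cnj g)"
  unfolding FDP_def FBDP_def by (simp; algebra?)
lemma GDP_cnj: "cnj (GDP \<i> l (cnj r) q (cnj q) f g) = GBDP \<i> (cnj l) r q (cnj q) (cnj f) (cnj g)"
  unfolding GDP_def GBDP_def by (simp; algebra?)

lemma D_gen:
  fixes j h u ub r rb q qb D :: complex
  assumes j: "j*j = -1" and h: "h \<noteq> 0" and E: "4*j*D + T0F j h u r rb q qb = 0"
  shows "4*h*D = j*TpP j h u ub r rb q qb"
proof -
  have t: "TpP j h u ub r rb q qb = h*T0F j h u r rb q qb"
    unfolding TpP_def T0F_def using h by (simp add: field_simps)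
  have e: "T0F j h u r rb q qb = -(4*j*D)" using E by (metis add.commute eq_neg_iff_add_eq_0)
  show ?thesis using t e j by algebra
qed


lemma NuP_deriv:
  fixes uu ff gg :: "real \<Rightarrow> complex"
  assumes a: "(uu has_vector_derivative du) (at t)" "(ff has_vector_derivative df) (at t)" "(gg has_vector_derivative dg) (at t)"
  shows "((\<lambda>s. NuP j h l lb (uu s) (ff s) (cnj (ff s)) (gg s) (cnj (gg s))) has_vector_derivative
     (Nu_u j h l lb (uu t) (ff t) (cnj (ff t)) (gg t) (cnj (gg t)) * du + Nu_f j h l lb (uu t) (ff t) (cnj (ff t)) (gg t) (cnj (gg t)) * df
      + Nu_fb j h l lb (uu t) (ff t) (cnj (ff t)) (gg t) (cnj (gg t)) * cnj df + Nu_g j h l lb (uu t) (ff t) (cnj (ff t)) (gg t) (cnj (gg t)) * dg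
      + Nu_gb j h l lb (uu t) (ff t) (cnj (ff t)) (gg t) (cnj (gg t)) * cnj dg)) (at t)"
proof -
  have c: "((\<lambda>s. cnj (ff s)) has_vector_derivative cnj df) (at t)" "((\<lambda>s. cnj (gg s)) has_vector_derivative cnj dg) (at t)"
    using a by (auto intro: has_vector_derivative_cnj)
  show ?thesis unfolding NuP_def
    apply (rule has_vector_derivative_eq_rhs)
     apply (rule derivative_intros a c)+
    unfolding Nu_u_def Nu_f_def Nu_fb_def Nu_g_def Nu_gb_def by algebra
qed

lemma UdP_deriv:
  fixes uu ff gg :: "real \<Rightarrow> complex"
  assumes a: "(uu has_vector_derivative du) (at t)" "(ff has_vector_derivative df) (at t)" "(gg has_vector_derivative dg) (at t)"
  shows "((\<lambda>s. UdP j h l lb (uu s) (ff s) (cnj (ff s)) (gg s) (cnj (gg s))) has_vector_derivative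
     (Ud_u j h l lb (uu t) (ff t) (cnj (ff t)) (gg t) (cnj (gg t)) * du + Ud_f j h l lb (uu t) (ff t) (cnj (ff t)) (gg t) (cnj (gg t)) * df
      + Ud_fb j h l lb (uu t) (ff t) (cnj (ff t)) (gg t) (cnj (gg t)) * cnj df + Ud_g j h l lb (uu t) (ff t) (cnj (ff t)) (gg t) (cnj (gg t)) * dg
      + Ud_gb j h l lb (uu t) (ff t) (cnj (ff t)) (gg t) (cnj (gg t)) * cnj dg)) (at t)"
proof -
  have c: "((\<lambda>s. cnj (ff s)) has_vector_derivative cnj df) (at t)" "((\<lambda>s. cnj (gg s)) has_vector_derivative cnj dg) (at t)"
    using a by (auto intro: has_vector_derivative_cnj)
  show ?thesis unfolding UdP_def
    apply (rule has_vector_derivative_eq_rhs)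
     apply (rule derivative_intros a c)+
    unfolding Ud_u_def Ud_f_def Ud_fb_def Ud_g_def Ud_gb_def by algebra
qed
theorem theorem1:
  fixes h :: real and l1 :: complex
    and U R Q f g :: "int \<Rightarrow> real \<Rightarrow> complex"
  assumes hpos: "h > 0"
    and l1nz: "l1 \<noteq> 0"
    and sol: "mtm_solution h U R Q"
    and lax: "lax_solution h U R Q l1 f g"
    and nonzero: "\<exists>n t. f n t \<noteq> 0 \<or> g n t \<noteq> 0"
  defines "U1 \<equiv> \<lambda>n t. U1_num h l1 (U n t) (f n t) (g n t) / U1_den h l1 (U n t) (f n t) (g n t)"
    and "R1 \<equiv> \<lambda>n t. R1_num l1 (R n t) (f n t) (g n t) / R1_den l1 (f n t) (g n t)"
    and "Q1 \<equiv> \<lambda>n t. Q1_num l1 (Q n t) (f n t) (g n t) / Q1_den l1 (f n t) (g n t)"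
  shows "\<forall>n t.
           U1_den h l1 (U n t) (f n t) (g n t) \<noteq> 0
         \<and> R1_den l1 (f n t) (g n t) \<noteq> 0 \<and> R1_den l1 (f (n+1) t) (g (n+1) t) \<noteq> 0
         \<and> Q1_den l1 (f n t) (g n t) \<noteq> 0 \<and> Q1_den l1 (f (n+1) t) (g (n+1) t) \<noteq> 0
         \<longrightarrow> U1 n differentiable (at t) \<and> R1 n differentiable (at t) \<and> Q1 n differentiable (at t)
           \<and> mtm_eqs h U1 R1 Q1 n t (vector_derivative (U1 n) (at t))"
proof (intro allI impI)
  fix n t
  assume H: "U1_den h l1 (U n t) (f n t) (g n t) \<noteq> 0 \<and> R1_den l1 (f n t) (g n t) \<noteq> 0 \<and> R1_den l1 (f (n+1) t) (g (n+1) t) \<noteq> 0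
         \<and> Q1_den l1 (f n t) (g n t) \<noteq> 0 \<and> Q1_den l1 (f (n+1) t) (g (n+1) t) \<noteq> 0"
  have ii: "\<i> * \<i> = (-1::complex)" by simp
  have hnz: "(complex_of_real h) \<noteq> 0" using hpos by simp
  have lbnz: "(cnj l1) \<noteq> 0" using l1nz by simp
  have SO: "U n differentiable (at t)" "R n differentiable (at t)" "Q n differentiable (at t)" "mtm_eqs h U R Q n t (vector_derivative (U n) (at t))"
    using sol unfolding mtm_solution_def by auto
  have Eo: "4 * \<i> * (vector_derivative (U n) (at t)) + (Q (n+1) t) + (Q n t) + (2 * \<i> / (complex_of_real h)) * ((R (n+1) t) - (R n t)) + (U n t)^2 * (cnj (R n t) + cnj (R (n+1) t)) - (U n t) * (asq (Q (n+1) t) + asq (Q n t) + asq (R (n+1) t) + asq (R n t)) - (\<i> * (complex_of_real h) / 2) * (U n t)^2 * (cnj (Q (n+1) t) - cnj (Q n t)) = 0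
     \<and> - (2 * \<i> / (complex_of_real h)) * ((Q (n+1) t) - (Q n t)) + 2 * (U n t) - asq (U n t) * ((Q (n+1) t) + (Q n t)) = 0
     \<and> (R (n+1) t) + (R n t) - 2 * (U n t) + (\<i> * (complex_of_real h) / 2) * asq (U n t) * ((R (n+1) t) - (R n t)) = 0"
    using SO(4) unfolding mtm_eqs_def Let_def .
  have Eo1: "4 * \<i> * (vector_derivative (U n) (at t)) + (Q (n+1) t) + (Q n t) + (2 * \<i> / (complex_of_real h)) * ((R (n+1) t) - (R n t)) + (U n t)^2 * (cnj (R n t) + cnj (R (n+1) t)) - (U n t) * (asq (Q (n+1) t) + asq (Q n t) + asq (R (n+1) t) + asq (R n t)) - (\<i> * (complex_of_real h) / 2) * (U n t)^2 * (cnj (Q (n+1) t) - cnj (Q n t)) = 0"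
    using Eo by (rule conjunct1)
  have Eo2: "- (2 * \<i> / (complex_of_real h)) * ((Q (n+1) t) - (Q n t)) + 2 * (U n t) - asq (U n t) * ((Q (n+1) t) + (Q n t)) = 0"
    using Eo by blast
  have Eo3: "(R (n+1) t) + (R n t) - 2 * (U n t) + (\<i> * (complex_of_real h) / 2) * asq (U n t) * ((R (n+1) t) - (R n t)) = 0"
    using Eo by blast
  have LX: "(f (n+1) t) = N11 h (U n t) l1 * (f n t) + N12 h (U n t) l1 * (g n t) \<and> (g (n+1) t) = N21 h (U n t) l1 * (f n t) + N22 h (U n t) l1 * (g n t)
     \<and> (f n has_vector_derivative (P11 (R n t) (Q n t) l1 * f n t + P12 (R n t) (Q n t) l1 * g n t)) (at t) \<and> (g n has_vector_derivative (P21 (R n t) (Q n t) l1 * f n t + P22 (R n t) (Q n t) l1 * g n t)) (at t)"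
    using lax unfolding lax_solution_def by blast
  have Snz: "(s2P \<i> (complex_of_real h) (U n t) (cnj (U n t))) \<noteq> 0" "(sb2P \<i> (complex_of_real h) (U n t) (cnj (U n t))) \<noteq> 0" using s2_nz by auto
  have snz: "2 - \<i> * (complex_of_real h) * (U n t) * (cnj (U n t)) \<noteq> 0" "2 + \<i> * (complex_of_real h) * (U n t) * (cnj (U n t)) \<noteq> 0" using s_nz by auto
  have E3g: "(R (n+1) t) + (R n t) - 2*(U n t) + (\<i>*(complex_of_real h)/2)*((U n t)*(cnj (U n t)))*((R (n+1) t) - (R n t)) = 0" using Eo3 by (simp only: asq_eq)
  have E2g: "- (2*\<i>/(complex_of_real h))*((Q (n+1) t) - (Q n t)) + 2*(U n t) - ((U n t)*(cnj (U n t)))*((Q (n+1) t) + (Q n t)) = 0" using Eo2 by (simp only: asq_eq)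
  have E3gb: "(cnj (R (n+1) t)) + (cnj (R n t)) - 2*(cnj (U n t)) + (-\<i>*(complex_of_real h)/2)*((U n t)*(cnj (U n t)))*((cnj (R (n+1) t)) - (cnj (R n t))) = 0"
  proof -
    have "(cnj (R (n+1) t)) + (cnj (R n t)) - 2*(cnj (U n t)) + (-\<i>*(complex_of_real h)/2)*((U n t)*(cnj (U n t)))*((cnj (R (n+1) t)) - (cnj (R n t))) = cnj ((R (n+1) t) + (R n t) - 2*(U n t) + (\<i>*(complex_of_real h)/2)*((U n t)*(cnj (U n t)))*((R (n+1) t) - (R n t)))"
      by (simp; algebra?)
    thus ?thesis by (simp only: E3g complex_cnj_zero)
  qed
  have E2gb: "- (-2*\<i>/(complex_of_real h))*((cnj (Q (n+1) t)) - (cnj (Q n t))) + 2*(cnj (U n t)) - ((U n t)*(cnj (U n t)))*((cnj (Q (n+1) t)) + (cnj (Q n t))) = 0"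
  proof -
    have "- (-2*\<i>/(complex_of_real h))*((cnj (Q (n+1) t)) - (cnj (Q n t))) + 2*(cnj (U n t)) - ((U n t)*(cnj (U n t)))*((cnj (Q (n+1) t)) + (cnj (Q n t))) = cnj (- (2*\<i>/(complex_of_real h))*((Q (n+1) t) - (Q n t)) + 2*(U n t) - ((U n t)*(cnj (U n t)))*((Q (n+1) t) + (Q n t)))"
      by (simp; algebra?)
    thus ?thesis by (simp only: E2g complex_cnj_zero)
  qed
  have Ro: "4*\<i>*(vector_derivative (U n) (at t)) + (Q (n+1) t) + (Q n t) + (2*\<i>/(complex_of_real h))*((R (n+1) t) - (R n t)) + (U n t)^2*((cnj (R n t)) + (cnj (R (n+1) t))) - (U n t)*((Q (n+1) t)*(cnj (Q (n+1) t)) + (Q n t)*(cnj (Q n t)) + (R (n+1) t)*(cnj (R (n+1) t)) + (R n t)*(cnj (R n t))) - (\<i>*(complex_of_real h)/2)*(U n t)^2*((cnj (Q (n+1) t)) - (cnj (Q n t)))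
     = 4*\<i>*(vector_derivative (U n) (at t)) + T0F \<i> (complex_of_real h) (U n t) (R n t) (cnj (R n t)) (Q n t) (cnj (Q n t))"
    by (rule RED[OF ii hnz snz E3g E3gb E2g E2gb])
  have T0o: "4*\<i>*(vector_derivative (U n) (at t)) + T0F \<i> (complex_of_real h) (U n t) (R n t) (cnj (R n t)) (Q n t) (cnj (Q n t)) = 0"
    using Eo1[unfolded asq_eq] unfolding Ro .
  have hD: "4*(complex_of_real h)*(vector_derivative (U n) (at t)) = \<i>*(TpP \<i> (complex_of_real h) (U n t) (cnj (U n t)) (R n t) (cnj (R n t)) (Q n t) (cnj (Q n t)))" by (rule D_gen[OF ii hnz T0o])
  have hU: "(U n has_vector_derivative (vector_derivative (U n) (at t))) (at t)" using SO(1) vector_derivative_works by blast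
  have hf: "(f n has_vector_derivative (P11 (R n t) (Q n t) l1 * f n t + P12 (R n t) (Q n t) l1 * g n t)) (at t)" using LX by blast
  have hg: "(g n has_vector_derivative (P21 (R n t) (Q n t) l1 * f n t + P22 (R n t) (Q n t) l1 * g n t)) (at t)" using LX by blast
  have hfd: "2*l1*(P11 (R n t) (Q n t) l1 * f n t + P12 (R n t) (Q n t) l1 * g n t) = (FDP \<i> l1 (R n t) (cnj (R n t)) (Q n t) (f n t) (g n t))" unfolding P11_def P12_def asq_eq by (rule FD_gen(1)[OF l1nz])
  have hgd: "2*l1*l1*(P21 (R n t) (Q n t) l1 * f n t + P22 (R n t) (Q n t) l1 * g n t) = (GDP \<i> l1 (cnj (R n t)) (Q n t) (cnj (Q n t)) (f n t) (g n t))" unfolding P21_def P22_def asq_eq by (rule FD_gen(2)[OF l1nz])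
  have hfbd: "2*(cnj l1)*(cnj (P11 (R n t) (Q n t) l1 * f n t + P12 (R n t) (Q n t) l1 * g n t)) = (FBDP \<i> (cnj l1) (R n t) (cnj (R n t)) (cnj (Q n t)) (cnj (f n t)) (cnj (g n t)))"
  proof -
    have "cnj (2*l1*(P11 (R n t) (Q n t) l1 * f n t + P12 (R n t) (Q n t) l1 * g n t)) = cnj (FDP \<i> l1 (R n t) (cnj (R n t)) (Q n t) (f n t) (g n t))" using hfd by simp
    thus ?thesis by (simp only: FDP_cnj complex_cnj_mult complex_cnj_numeral)
  qed
  have hgbd: "2*(cnj l1)*(cnj l1)*(cnj (P21 (R n t) (Q n t) l1 * f n t + P22 (R n t) (Q n t) l1 * g n t)) = (GBDP \<i> (cnj l1) (R n t) (Q n t) (cnj (Q n t)) (cnj (f n t)) (cnj (g n t)))"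
  proof -
    have "cnj (2*l1*l1*(P21 (R n t) (Q n t) l1 * f n t + P22 (R n t) (Q n t) l1 * g n t)) = cnj (GDP \<i> l1 (cnj (R n t)) (Q n t) (cnj (Q n t)) (f n t) (g n t))" using hgd by simp
    thus ?thesis by (simp only: GDP_cnj complex_cnj_mult complex_cnj_numeral)
  qed
  have F1e: "(f (n+1) t) = (F1P \<i> (complex_of_real h) l1 (U n t) (cnj (U n t)) (f n t) (g n t))/((complex_of_real h)*l1*(s2P \<i> (complex_of_real h) (U n t) (cnj (U n t))))"
  proof -
    have "(f (n+1) t) = N11 h (U n t) l1 * (f n t) + N12 h (U n t) l1 * (g n t)" using LX by blast
    also have "\<dots> = (F1P \<i> (complex_of_real h) l1 (U n t) (cnj (U n t)) (f n t) (g n t))/((complex_of_real h)*l1*(s2P \<i> (complex_of_real h) (U n t) (cnj (U n t))))"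
      unfolding N11_def N12_def mtm_S_def asq_eq by (rule F_gen(1)[OF ii hnz l1nz Snz(1)])
    finally show ?thesis .
  qed
  have G1e: "(g (n+1) t) = (G1P \<i> (complex_of_real h) l1 (U n t) (cnj (U n t)) (f n t) (g n t))/((complex_of_real h)*l1*(s2P \<i> (complex_of_real h) (U n t) (cnj (U n t))))"
  proof -
    have "(g (n+1) t) = N21 h (U n t) l1 * (f n t) + N22 h (U n t) l1 * (g n t)" using LX by blast
    also have "\<dots> = (G1P \<i> (complex_of_real h) l1 (U n t) (cnj (U n t)) (f n t) (g n t))/((complex_of_real h)*l1*(s2P \<i> (complex_of_real h) (U n t) (cnj (U n t))))"
      unfolding N21_def N22_def mtm_S_def asq_eq by (rule F_gen(2)[OF ii hnz l1nz Snz(1)])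
    finally show ?thesis .
  qed
  have F1be: "(cnj (f (n+1) t)) = (F1bP \<i> (complex_of_real h) (cnj l1) (U n t) (cnj (U n t)) (cnj (f n t)) (cnj (g n t)))/((complex_of_real h)*(cnj l1)*(sb2P \<i> (complex_of_real h) (U n t) (cnj (U n t))))"
  proof -
    have "(cnj (f (n+1) t)) = cnj ((F1P \<i> (complex_of_real h) l1 (U n t) (cnj (U n t)) (f n t) (g n t))/((complex_of_real h)*l1*(s2P \<i> (complex_of_real h) (U n t) (cnj (U n t)))))" using F1e by simp
    also have "\<dots> = (F1bP \<i> (complex_of_real h) (cnj l1) (U n t) (cnj (U n t)) (cnj (f n t)) (cnj (g n t)))/((complex_of_real h)*(cnj l1)*(sb2P \<i> (complex_of_real h) (U n t) (cnj (U n t))))" by (simp add: F1P_cnj s2P_cnj)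
    finally show ?thesis .
  qed
  have G1be: "(cnj (g (n+1) t)) = (G1bP \<i> (complex_of_real h) (cnj l1) (U n t) (cnj (U n t)) (cnj (f n t)) (cnj (g n t)))/((complex_of_real h)*(cnj l1)*(sb2P \<i> (complex_of_real h) (U n t) (cnj (U n t))))"
  proof -
    have "(cnj (g (n+1) t)) = cnj ((G1P \<i> (complex_of_real h) l1 (U n t) (cnj (U n t)) (f n t) (g n t))/((complex_of_real h)*l1*(s2P \<i> (complex_of_real h) (U n t) (cnj (U n t)))))" using G1e by simp
    also have "\<dots> = (G1bP \<i> (complex_of_real h) (cnj l1) (U n t) (cnj (U n t)) (cnj (f n t)) (cnj (g n t)))/((complex_of_real h)*(cnj l1)*(sb2P \<i> (complex_of_real h) (U n t) (cnj (U n t))))" by (simp add: G1P_cnj s2P_cnj)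
    finally show ?thesis .
  qed
  have r1e: "(R (n+1) t) = (4*(U n t) - (s2P \<i> (complex_of_real h) (U n t) (cnj (U n t)))*(R n t))/(sb2P \<i> (complex_of_real h) (U n t) (cnj (U n t)))" by (rule r1_sol[OF E3g Snz(2)])
  have q1e: "(Q (n+1) t) = ((sb2P \<i> (complex_of_real h) (U n t) (cnj (U n t)))*(Q n t) - 2*\<i>*(complex_of_real h)*(U n t))/(s2P \<i> (complex_of_real h) (U n t) (cnj (U n t)))" by (rule q1_sol[OF ii hnz E2g Snz(1)])
  have dR: "l1*((f (n+1) t)*(cnj (f (n+1) t))) + (cnj l1)*((g (n+1) t)*(cnj (g (n+1) t))) \<noteq> 0" using H by (simp add: R1_den_def asq_eq)
  have dQ: "(l1*(cnj l1))*((cnj l1)*((f (n+1) t)*(cnj (f (n+1) t))) + l1*((g (n+1) t)*(cnj (g (n+1) t)))) \<noteq> 0" using H by (simp add: Q1_den_def asq_eq)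
  note ZLi = ZL[OF ii] and ZLbi = ZLb[OF ii] and MrLi = MrL[OF ii] and MqLi = MqL[OF ii]
  have NR: "(K2bP \<i> (complex_of_real h) l1 (cnj l1) (U n t) (cnj (U n t)) (f n t) (cnj (f n t)) (g n t) (cnj (g n t))) \<noteq> 0" "-(((cnj l1)*((f (n+1) t)*(cnj (f (n+1) t))) + l1*((g (n+1) t)*(cnj (g (n+1) t))))*(R (n+1) t) + (l1*l1-(cnj l1)*(cnj l1))*(f (n+1) t)*(cnj (g (n+1) t))) / (l1*((f (n+1) t)*(cnj (f (n+1) t))) + (cnj l1)*((g (n+1) t)*(cnj (g (n+1) t)))) = (MrP \<i> (complex_of_real h) l1 (cnj l1) (U n t) (cnj (U n t)) (R n t) (f n t) (cnj (f n t)) (g n t) (cnj (g n t)))/(K2bP \<i> (complex_of_real h) l1 (cnj l1) (U n t) (cnj (U n t)) (f n t) (cnj (f n t)) (g n t) (cnj (g n t)))"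
    using NextR[OF F1e F1be G1e G1be r1e hnz l1nz lbnz Snz dR ZLi ZLbi MrLi] by auto
  have NQ: "(K2P \<i> (complex_of_real h) l1 (cnj l1) (U n t) (cnj (U n t)) (f n t) (cnj (f n t)) (g n t) (cnj (g n t))) \<noteq> 0" "-((l1*(cnj l1))*(l1*((f (n+1) t)*(cnj (f (n+1) t))) + (cnj l1)*((g (n+1) t)*(cnj (g (n+1) t))))*(Q (n+1) t) + (l1*l1-(cnj l1)*(cnj l1))*(f (n+1) t)*(cnj (g (n+1) t))) / ((l1*(cnj l1))*((cnj l1)*((f (n+1) t)*(cnj (f (n+1) t))) + l1*((g (n+1) t)*(cnj (g (n+1) t))))) = (MqP \<i> (complex_of_real h) l1 (cnj l1) (U n t) (cnj (U n t)) (Q n t) (f n t) (cnj (f n t)) (g n t) (cnj (g n t)))/(l1*(cnj l1)*(K2P \<i> (complex_of_real h) l1 (cnj l1) (U n t) (cnj (U n t)) (f n t) (cnj (f n t)) (g n t) (cnj (g n t))))"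
    using NextQ[OF F1e F1be G1e G1be q1e hnz l1nz lbnz Snz dQ ZLi ZLbi MqLi] by auto
  have R11: "(R1 (n+1) t) = (MrP \<i> (complex_of_real h) l1 (cnj l1) (U n t) (cnj (U n t)) (R n t) (f n t) (cnj (f n t)) (g n t) (cnj (g n t)))/(K2bP \<i> (complex_of_real h) l1 (cnj l1) (U n t) (cnj (U n t)) (f n t) (cnj (f n t)) (g n t) (cnj (g n t)))"
  proof -
    have "(R1 (n+1) t) = R1_num l1 (R (n+1) t) (f (n+1) t) (g (n+1) t) / R1_den l1 (f (n+1) t) (g (n+1) t)" by (simp add: R1_def)
    also have "\<dots> = -(((cnj l1)*((f (n+1) t)*(cnj (f (n+1) t))) + l1*((g (n+1) t)*(cnj (g (n+1) t))))*(R (n+1) t) + (l1*l1-(cnj l1)*(cnj l1))*(f (n+1) t)*(cnj (g (n+1) t))) / (l1*((f (n+1) t)*(cnj (f (n+1) t))) + (cnj l1)*((g (n+1) t)*(cnj (g (n+1) t))))"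
      by (simp only: R1_num_def R1_den_def asq_eq power2_eq_square)
    also have "\<dots> = (MrP \<i> (complex_of_real h) l1 (cnj l1) (U n t) (cnj (U n t)) (R n t) (f n t) (cnj (f n t)) (g n t) (cnj (g n t)))/(K2bP \<i> (complex_of_real h) l1 (cnj l1) (U n t) (cnj (U n t)) (f n t) (cnj (f n t)) (g n t) (cnj (g n t)))" by (rule NR(2))
    finally show ?thesis .
  qed
  have Q11: "(Q1 (n+1) t) = (MqP \<i> (complex_of_real h) l1 (cnj l1) (U n t) (cnj (U n t)) (Q n t) (f n t) (cnj (f n t)) (g n t) (cnj (g n t)))/(l1*(cnj l1)*(K2P \<i> (complex_of_real h) l1 (cnj l1) (U n t) (cnj (U n t)) (f n t) (cnj (f n t)) (g n t) (cnj (g n t))))"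
  proof -
    have "(Q1 (n+1) t) = Q1_num l1 (Q (n+1) t) (f (n+1) t) (g (n+1) t) / Q1_den l1 (f (n+1) t) (g (n+1) t)" by (simp add: Q1_def)
    also have "\<dots> = -((l1*(cnj l1))*(l1*((f (n+1) t)*(cnj (f (n+1) t))) + (cnj l1)*((g (n+1) t)*(cnj (g (n+1) t))))*(Q (n+1) t) + (l1*l1-(cnj l1)*(cnj l1))*(f (n+1) t)*(cnj (g (n+1) t))) / ((l1*(cnj l1))*((cnj l1)*((f (n+1) t)*(cnj (f (n+1) t))) + l1*((g (n+1) t)*(cnj (g (n+1) t)))))"
      by (simp only: Q1_num_def Q1_den_def asq_eq power2_eq_square)
    also have "\<dots> = (MqP \<i> (complex_of_real h) l1 (cnj l1) (U n t) (cnj (U n t)) (Q n t) (f n t) (cnj (f n t)) (g n t) (cnj (g n t)))/(l1*(cnj l1)*(K2P \<i> (complex_of_real h) l1 (cnj l1) (U n t) (cnj (U n t)) (f n t) (cnj (f n t)) (g n t) (cnj (g n t))))" by (rule NQ(2))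
    finally show ?thesis .
  qed
  have u1e: "(U1 n t) = (NuP \<i> (complex_of_real h) l1 (cnj l1) (U n t) (f n t) (cnj (f n t)) (g n t) (cnj (g n t)))/(UdP \<i> (complex_of_real h) l1 (cnj l1) (U n t) (f n t) (cnj (f n t)) (g n t) (cnj (g n t)))" by (simp add: U1_def U1n_br U1d_br)
  have u1be: "(cnj (U1 n t)) = (NubP \<i> (complex_of_real h) l1 (cnj l1) (cnj (U n t)) (f n t) (cnj (f n t)) (g n t) (cnj (g n t)))/(UdbP \<i> (complex_of_real h) l1 (cnj l1) (cnj (U n t)) (f n t) (cnj (f n t)) (g n t) (cnj (g n t)))" by (simp add: U1_def U1n_cbr U1d_cbr)
  have r10e: "(R1 n t) = (R0nP l1 (cnj l1) (R n t) (f n t) (cnj (f n t)) (g n t) (cnj (g n t)))/(Rd0P l1 (cnj l1) (f n t) (cnj (f n t)) (g n t) (cnj (g n t)))" by (simp add: R1_def R1n_br R1d_br)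
  have r10be: "(cnj (R1 n t)) = (R0nbP l1 (cnj l1) (cnj (R n t)) (f n t) (cnj (f n t)) (g n t) (cnj (g n t)))/(Rd0bP l1 (cnj l1) (f n t) (cnj (f n t)) (g n t) (cnj (g n t)))" by (simp add: R1_def R1n_cbr R1d_cbr)
  have q10e: "(Q1 n t) = (Q0nP l1 (cnj l1) (Q n t) (f n t) (cnj (f n t)) (g n t) (cnj (g n t)))/(l1*(cnj l1)*(Rd0bP l1 (cnj l1) (f n t) (cnj (f n t)) (g n t) (cnj (g n t))))" by (simp add: Q1_def Q1n_br Q1d_br)
  have q10be: "(cnj (Q1 n t)) = (Q0nbP l1 (cnj l1) (cnj (Q n t)) (f n t) (cnj (f n t)) (g n t) (cnj (g n t)))/(l1*(cnj l1)*(Rd0P l1 (cnj l1) (f n t) (cnj (f n t)) (g n t) (cnj (g n t))))" by (simp add: Q1_def Q1n_cbr Q1d_cbr)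
  have UdNZ: "(UdP \<i> (complex_of_real h) l1 (cnj l1) (U n t) (f n t) (cnj (f n t)) (g n t) (cnj (g n t))) \<noteq> 0" using H by (simp add: U1d_br)
  have UdbNZ: "(UdbP \<i> (complex_of_real h) l1 (cnj l1) (cnj (U n t)) (f n t) (cnj (f n t)) (g n t) (cnj (g n t))) \<noteq> 0" using H by (simp add: U1d_cbr[symmetric])
  have RdNZ: "(Rd0P l1 (cnj l1) (f n t) (cnj (f n t)) (g n t) (cnj (g n t))) \<noteq> 0" using H by (simp add: R1d_br)
  have RdbNZ: "(Rd0bP l1 (cnj l1) (f n t) (cnj (f n t)) (g n t) (cnj (g n t))) \<noteq> 0" using H by (simp add: R1d_cbr[symmetric])
  note KLi = KL[OF ii] and KLbi = KLb[OF ii] and E3Li = E3L[OF ii] and E2Li = E2L[OF ii] and E1Li = E1L[OF ii]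
  have E3t: "(R1 (n+1) t) + (R1 n t) - 2*(U1 n t) + (\<i>*(complex_of_real h)/2)*((U1 n t)*(cnj (U1 n t)))*((R1 (n+1) t) - (R1 n t)) = 0"
    by (rule Comb3[OF u1e u1be r10e R11 UdNZ UdbNZ RdNZ NR(1) KLi KLbi E3Li])
  have E2t: "- (2*\<i>/(complex_of_real h))*((Q1 (n+1) t) - (Q1 n t)) + 2*(U1 n t) - ((U1 n t)*(cnj (U1 n t)))*((Q1 (n+1) t) + (Q1 n t)) = 0"
    by (rule Comb2[OF u1e u1be q10e Q11 UdNZ UdbNZ RdbNZ NQ(1) l1nz lbnz hnz ii KLi E2Li])
  have E3tb: "(cnj (R1 (n+1) t)) + (cnj (R1 n t)) - 2*(cnj (U1 n t)) + (-\<i>*(complex_of_real h)/2)*((U1 n t)*(cnj (U1 n t)))*((cnj (R1 (n+1) t)) - (cnj (R1 n t))) = 0"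
  proof -
    have "(cnj (R1 (n+1) t)) + (cnj (R1 n t)) - 2*(cnj (U1 n t)) + (-\<i>*(complex_of_real h)/2)*((U1 n t)*(cnj (U1 n t)))*((cnj (R1 (n+1) t)) - (cnj (R1 n t))) = cnj ((R1 (n+1) t) + (R1 n t) - 2*(U1 n t) + (\<i>*(complex_of_real h)/2)*((U1 n t)*(cnj (U1 n t)))*((R1 (n+1) t) - (R1 n t)))"
      by (simp; algebra?)
    thus ?thesis by (simp only: E3t complex_cnj_zero)
  qed
  have E2tb: "- (-2*\<i>/(complex_of_real h))*((cnj (Q1 (n+1) t)) - (cnj (Q1 n t))) + 2*(cnj (U1 n t)) - ((U1 n t)*(cnj (U1 n t)))*((cnj (Q1 (n+1) t)) + (cnj (Q1 n t))) = 0"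
  proof -
    have "- (-2*\<i>/(complex_of_real h))*((cnj (Q1 (n+1) t)) - (cnj (Q1 n t))) + 2*(cnj (U1 n t)) - ((U1 n t)*(cnj (U1 n t)))*((cnj (Q1 (n+1) t)) + (cnj (Q1 n t))) = cnj (- (2*\<i>/(complex_of_real h))*((Q1 (n+1) t) - (Q1 n t)) + 2*(U1 n t) - ((U1 n t)*(cnj (U1 n t)))*((Q1 (n+1) t) + (Q1 n t)))"
      by (simp; algebra?)
    thus ?thesis by (simp only: E2t complex_cnj_zero)
  qed
  have U1fun: "U1 n = (\<lambda>s. NuP \<i> (complex_of_real h) l1 (cnj l1) (U n s) (f n s) (cnj (f n s)) (g n s) (cnj (g n s)) / UdP \<i> (complex_of_real h) l1 (cnj l1) (U n s) (f n s) (cnj (f n s)) (g n s) (cnj (g n s)))"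
    by (rule ext) (simp add: U1_def U1n_br U1d_br)
  have hU1: "(U1 n has_vector_derivative ((((Nu_u \<i> (complex_of_real h) l1 (cnj l1) (U n t) (f n t) (cnj (f n t)) (g n t) (cnj (g n t)))*(vector_derivative (U n) (at t)) + (Nu_f \<i> (complex_of_real h) l1 (cnj l1) (U n t) (f n t) (cnj (f n t)) (g n t) (cnj (g n t)))*(P11 (R n t) (Q n t) l1 * f n t + P12 (R n t) (Q n t) l1 * g n t) + (Nu_fb \<i> (complex_of_real h) l1 (cnj l1) (U n t) (f n t) (cnj (f n t)) (g n t) (cnj (g n t)))*(cnj (P11 (R n t) (Q n t) l1 * f n t + P12 (R n t) (Q n t) l1 * g n t)) + (Nu_g \<i> (complex_of_real h) l1 (cnj l1) (U n t) (f n t) (cnj (f n t)) (g n t) (cnj (g n t)))*(P21 (R n t) (Q n t) l1 * f n t + P22 (R n t) (Q n t) l1 * g n t) + (Nu_gb \<i> (complex_of_real h) l1 (cnj l1) (U n t) (f n t) (cnj (f n t)) (g n t) (cnj (g n t)))*(cnj (P21 (R n t) (Q n t) l1 * f n t + P22 (R n t) (Q n t) l1 * g n t)))*(UdP \<i> (complex_of_real h) l1 (cnj l1) (U n t) (f n t) (cnj (f n t)) (g n t) (cnj (g n t))) - (NuP \<i> (complex_of_real h) l1 (cnj l1) (U n t) (f n t) (cnj (f n t)) (g n t) (cnj (g n t)))*((Ud_u \<i> (complex_of_real h) l1 (cnj l1) (U n t) (f n t) (cnj (f n t)) (g n t) (cnj (g n t)))*(vector_derivative (U n) (at t)) + (Ud_f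 \<i> (complex_of_real h) l1 (cnj l1) (U n t) (f n t) (cnj (f n t)) (g n t) (cnj (g n t)))*(P11 (R n t) (Q n t) l1 * f n t + P12 (R n t) (Q n t) l1 * g n t) + (Ud_fb \<i> (complex_of_real h) l1 (cnj l1) (U n t) (f n t) (cnj (f n t)) (g n t) (cnj (g n t)))*(cnj (P11 (R n t) (Q n t) l1 * f n t + P12 (R n t) (Q n t) l1 * g n t)) + (Ud_g \<i> (complex_of_real h) l1 (cnj l1) (U n t) (f n t) (cnj (f n t)) (g n t) (cnj (g n t)))*(P21 (R n t) (Q n t) l1 * f n t + P22 (R n t) (Q n t) l1 * g n t) + (Ud_gb \<i> (complex_of_real h) l1 (cnj l1) (U n t) (f n t) (cnj (f n t)) (g n t) (cnj (g n t)))*(cnj (P21 (R n t) (Q n t) l1 * f n t + P22 (R n t) (Q n t) l1 * g n t))))/((UdP \<i> (complex_of_real h) l1 (cnj l1) (U n t) (f n t) (cnj (f n t)) (g n t) (cnj (g n t)))*(UdP \<i> (complex_of_real h) l1 (cnj l1) (U n t) (f n t) (cnj (f n t)) (g n t) (cnj (g n t)))))) (at t)"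
    unfolding U1fun by (rule QD[OF NuP_deriv[OF hU hf hg] UdP_deriv[OF hU hf hg] UdNZ])
  have D1e: "(vector_derivative (U1 n) (at t)) = (((Nu_u \<i> (complex_of_real h) l1 (cnj l1) (U n t) (f n t) (cnj (f n t)) (g n t) (cnj (g n t)))*(vector_derivative (U n) (at t)) + (Nu_f \<i> (complex_of_real h) l1 (cnj l1) (U n t) (f n t) (cnj (f n t)) (g n t) (cnj (g n t)))*(P11 (R n t) (Q n t) l1 * f n t + P12 (R n t) (Q n t) l1 * g n t) + (Nu_fb \<i> (complex_of_real h) l1 (cnj l1) (U n t) (f n t) (cnj (f n t)) (g n t) (cnj (g n t)))*(cnj (P11 (R n t) (Q n t) l1 * f n t + P12 (R n t) (Q n t) l1 * g n t)) + (Nu_g \<i> (complex_of_real h) l1 (cnj l1) (U n t) (f n t) (cnj (f n t)) (g n t) (cnj (g n t)))*(P21 (R n t) (Q n t) l1 * f n t + P22 (R n t) (Q n t) l1 * g n t) + (Nu_gb \<i> (complex_of_real h) l1 (cnj l1) (U n t) (f n t) (cnj (f n t)) (g n t) (cnj (g n t)))*(cnj (P21 (R n t) (Q n t) l1 * f n t + P22 (R n t) (Q n t) l1 * g n t)))*(UdP \<i> (complex_of_real h) l1 (cnj l1) (U n t) (f n t) (cnj (f n t)) (g n t) (cnj (g n t))) - (NuP \<i> (complex_of_real h) l1 (cnj l1) (U n t) (f n t) (cnj (f n t)) (g n t) (cnj (g n t)))*((Ud_u \<i> (complex_of_real h) l1 (cnj l1) (U n t) (f n t) (cnj (f n t)) (g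 n t) (cnj (g n t)))*(vector_derivative (U n) (at t)) + (Ud_f \<i> (complex_of_real h) l1 (cnj l1) (U n t) (f n t) (cnj (f n t)) (g n t) (cnj (g n t)))*(P11 (R n t) (Q n t) l1 * f n t + P12 (R n t) (Q n t) l1 * g n t) + (Ud_fb \<i> (complex_of_real h) l1 (cnj l1) (U n t) (f n t) (cnj (f n t)) (g n t) (cnj (g n t)))*(cnj (P11 (R n t) (Q n t) l1 * f n t + P12 (R n t) (Q n t) l1 * g n t)) + (Ud_g \<i> (complex_of_real h) l1 (cnj l1) (U n t) (f n t) (cnj (f n t)) (g n t) (cnj (g n t)))*(P21 (R n t) (Q n t) l1 * f n t + P22 (R n t) (Q n t) l1 * g n t) + (Ud_gb \<i> (complex_of_real h) l1 (cnj l1) (U n t) (f n t) (cnj (f n t)) (g n t) (cnj (g n t)))*(cnj (P21 (R n t) (Q n t) l1 * f n t + P22 (R n t) (Q n t) l1 * g n t))))/((UdP \<i> (complex_of_real h) l1 (cnj l1) (U n t) (f n t) (cnj (f n t)) (g n t) (cnj (g n t)))*(UdP \<i> (complex_of_real h) l1 (cnj l1) (U n t) (f n t) (cnj (f n t)) (g n t) (cnj (g n t))))" using hU1 by (rule vector_derivative_at)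
  have C1: "4*\<i>*((((Nu_u \<i> (complex_of_real h) l1 (cnj l1) (U n t) (f n t) (cnj (f n t)) (g n t) (cnj (g n t)))*(vector_derivative (U n) (at t)) + (Nu_f \<i> (complex_of_real h) l1 (cnj l1) (U n t) (f n t) (cnj (f n t)) (g n t) (cnj (g n t)))*(P11 (R n t) (Q n t) l1 * f n t + P12 (R n t) (Q n t) l1 * g n t) + (Nu_fb \<i> (complex_of_real h) l1 (cnj l1) (U n t) (f n t) (cnj (f n t)) (g n t) (cnj (g n t)))*(cnj (P11 (R n t) (Q n t) l1 * f n t + P12 (R n t) (Q n t) l1 * g n t)) + (Nu_g \<i> (complex_of_real h) l1 (cnj l1) (U n t) (f n t) (cnj (f n t)) (g n t) (cnj (g n t)))*(P21 (R n t) (Q n t) l1 * f n t + P22 (R n t) (Q n t) l1 * g n t) + (Nu_gb \<i> (complex_of_real h) l1 (cnj l1) (U n t) (f n t) (cnj (f n t)) (g n t) (cnj (g n t)))*(cnj (P21 (R n t) (Q n t) l1 * f n t + P22 (R n t) (Q n t) l1 * g n t)))*(UdP \<i> (complex_of_real h) l1 (cnj l1) (U n t) (f n t) (cnj (f n t)) (g n t) (cnj (g n t))) - (NuP \<i> (complex_of_real h) l1 (cnj l1) (U n t) (f n t) (cnj (f n t)) (g n t) (cnj (g n t)))*((Ud_u \<i> (complex_of_real h) l1 (cnj l1) (U n t) (f n t) (cnj (f n t)) (g n t) (cnj (g n t)))*(vector_derivative (U n) (at t)) + (Ud_f \<i> (complex_of_real h) l1 (cnj l1) (U n t) (f n t)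 (cnj (f n t)) (g n t) (cnj (g n t)))*(P11 (R n t) (Q n t) l1 * f n t + P12 (R n t) (Q n t) l1 * g n t) + (Ud_fb \<i> (complex_of_real h) l1 (cnj l1) (U n t) (f n t) (cnj (f n t)) (g n t) (cnj (g n t)))*(cnj (P11 (R n t) (Q n t) l1 * f n t + P12 (R n t) (Q n t) l1 * g n t)) + (Ud_g \<i> (complex_of_real h) l1 (cnj l1) (U n t) (f n t) (cnj (f n t)) (g n t) (cnj (g n t)))*(P21 (R n t) (Q n t) l1 * f n t + P22 (R n t) (Q n t) l1 * g n t) + (Ud_gb \<i> (complex_of_real h) l1 (cnj l1) (U n t) (f n t) (cnj (f n t)) (g n t) (cnj (g n t)))*(cnj (P21 (R n t) (Q n t) l1 * f n t + P22 (R n t) (Q n t) l1 * g n t))))/((UdP \<i> (complex_of_real h) l1 (cnj l1) (U n t) (f n t) (cnj (f n t)) (g n t) (cnj (g n t)))*(UdP \<i> (complex_of_real h) l1 (cnj l1) (U n t) (f n t) (cnj (f n t)) (g n t) (cnj (g n t))))) + T0F \<i> (complex_of_real h) (U1 n t) (R1 n t) (cnj (R1 n t)) (Q1 n t) (cnj (Q1 n t)) = 0"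
    by (rule Comb1[OF u1e r10e r10be q10e q10be UdNZ RdNZ RdbNZ l1nz lbnz hnz hD hfd hgd hfbd hgbd refl refl E1Li])
  have snz1: "2 - \<i> * (complex_of_real h) * (U1 n t) * (cnj (U1 n t)) \<noteq> 0" "2 + \<i> * (complex_of_real h) * (U1 n t) * (cnj (U1 n t)) \<noteq> 0" using s_nz by auto
  have Rt: "4*\<i>*(vector_derivative (U1 n) (at t)) + (Q1 (n+1) t) + (Q1 n t) + (2*\<i>/(complex_of_real h))*((R1 (n+1) t) - (R1 n t)) + (U1 n t)^2*((cnj (R1 n t)) + (cnj (R1 (n+1) t))) - (U1 n t)*((Q1 (n+1) t)*(cnj (Q1 (n+1) t)) + (Q1 n t)*(cnj (Q1 n t)) + (R1 (n+1) t)*(cnj (R1 (n+1) t)) + (R1 n t)*(cnj (R1 n t))) - (\<i>*(complex_of_real h)/2)*(U1 n t)^2*((cnj (Q1 (n+1) t)) - (cnj (Q1 n t)))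
     = 4*\<i>*(vector_derivative (U1 n) (at t)) + T0F \<i> (complex_of_real h) (U1 n t) (R1 n t) (cnj (R1 n t)) (Q1 n t) (cnj (Q1 n t))"
    by (rule RED[OF ii hnz snz1 E3t E3tb E2t E2tb])
  have E1t: "4*\<i>*(vector_derivative (U1 n) (at t)) + (Q1 (n+1) t) + (Q1 n t) + (2*\<i>/(complex_of_real h))*((R1 (n+1) t) - (R1 n t)) + (U1 n t)^2*((cnj (R1 n t)) + (cnj (R1 (n+1) t))) - (U1 n t)*((Q1 (n+1) t)*(cnj (Q1 (n+1) t)) + (Q1 n t)*(cnj (Q1 n t)) + (R1 (n+1) t)*(cnj (R1 (n+1) t)) + (R1 n t)*(cnj (R1 n t))) - (\<i>*(complex_of_real h)/2)*(U1 n t)^2*((cnj (Q1 (n+1) t)) - (cnj (Q1 n t))) = 0"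
    unfolding Rt unfolding D1e by (rule C1)
  have fdiff: "f n differentiable (at t)" "g n differentiable (at t)"
    using hf hg differentiableI_vector by blast+
  have cdiff: "(\<lambda>s. cnj (f n s)) differentiable (at t)" "(\<lambda>s. cnj (g n s)) differentiable (at t)"
    using fdiff diff_cnj_at by blast+
  have R1fun: "R1 n = (\<lambda>s. R0nP l1 (cnj l1) (R n s) (f n s) (cnj (f n s)) (g n s) (cnj (g n s)) / Rd0P l1 (cnj l1) (f n s) (cnj (f n s)) (g n s) (cnj (g n s)))"
    by (rule ext) (simp add: R1_def R1n_br R1d_br)
  have Q1fun: "Q1 n = (\<lambda>s. Q0nP l1 (cnj l1) (Q n s) (f n s) (cnj (f n s)) (g n s) (cnj (g n s)) / (l1 * (cnj l1) * Rd0bP l1 (cnj l1) (f n s) (cnj (f n s)) (g n s) (cnj (g n s))))"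
    by (rule ext) (simp add: Q1_def Q1n_br Q1d_br)
  have d1: "U1 n differentiable (at t)" using hU1 differentiableI_vector by blast
  have d2: "R1 n differentiable (at t)"
    unfolding R1fun
    apply (rule differentiable_divide)
      apply (unfold R0nP_def)[1]
      apply (rule derivative_intros SO(2) fdiff cdiff)+
     apply (unfold Rd0P_def)[1]
     apply (rule derivative_intros SO(2) fdiff cdiff)+
    using RdNZ by simp
  have d3: "Q1 n differentiable (at t)"
    unfolding Q1fun
    apply (rule differentiable_divide)
      apply (unfold Q0nP_def Rd0P_def)[1]
      apply (rule derivative_intros SO(3) fdiff cdiff)+
     apply (unfold Rd0bP_def)[1]
     apply (rule derivative_intros SO(3) fdiff cdiff)+
    using RdbNZ l1nz lbnz by simp
  have mt: "mtm_eqs h U1 R1 Q1 n t (vector_derivative (U1 n) (at t))"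
    unfolding mtm_eqs_def Let_def asq_eq using E1t E2t E3t by blast
  show "U1 n differentiable (at t) \<and> R1 n differentiable (at t) \<and> Q1 n differentiable (at t) \<and> mtm_eqs h U1 R1 Q1 n t (vector_derivative (U1 n) (at t))"
    using d1 d2 d3 mt by blast
qed


end
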